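(* Let $\epsilon,h_b\ge0$ and, for $\mathrm U\ge0$, $E(\mathrm U):=\min_{k\in\mathbb T^2}\min\sigma(A(\mathrm U,k))$. Then $\mathrm U\mapsto E(\mathrm U)$ is increasing and the limit $E(\infty):=\lim_{\mathrm U\to\infty}E(\mathrm U)$ exists and equals $\sup_{\mathrm U\ge0}E(\mathrm U)\le0$.
   Context: Notation: $\mathbb T^2=[-\pi,\pi)^2$ with normalized Haar measure $\nu$; $L^2(\mathbb T^2)=L^2(\mathbb T^2,\nu)$, scalar product antilinear in the first argument. For $f\in\ell^1(\mathbb Z^2)$, $\hat f(k)=\sum_{x}e^{ik\cdot x}f(x)$, $k\in\mathbb R^2$. $\hat{\mathfrak e}_x(p)=e^{ip\cdot x}$; $P_x$ the orthogonal projection onto $\mathbb C\hat{\mathfrak e}_x$; $M_g$ multiplication by $g$; $\cos(q):=\cos q_1+\cos q_2$. Data: $\epsilon,h_b\ge0$; $\mathrm u:\mathbb Z^2\to[0,\infty)$, $\upsilon,\mathfrak p_1,\mathfrak p_2:\mathbb Z^2\to\mathbb R$, all invariant under $90^\circ$-rotations, $\mathrm u,\upsilon$ absolutely summable, $\sum_z e^{\alpha_0|z|}|\mathfrak p_j(z)|<\infty$ for some $\alpha_0>0$, $\mathfrak p_2(z)=0$ for $z\notin(2\mathbb Z)^2$, $\mathfrak p_1+\mathfrak p_2\neq0$, and for every $k$ some $x$ with $\mathfrak p_2(x)\neq-e^{ik\cdot x/2}\mathfrak p_1(x)$. For $k,p\in\mathbb T^2$: $\mathfrak b(k)=h_b\epsilon(2-\cos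 k)$, $\mathfrak f(k)(p)=\epsilon(4-\cos(p+k)-\cos p)$, $\mathfrak d(k)(p)=\hat{\mathfrak p}_1(k+p)+\hat{\mathfrak p}_2(k/2+p)$. $A_{1,1}(\mathrm U,k)=M_{\mathfrak f(k)}+\sum_x\mathrm u(x)P_x+\mathrm UP_0$; on $\mathcal H=L^2(\mathbb T^2)\oplus\mathbb C$, $A(\mathrm U,k)(\varphi,z)=\big(A_{1,1}(\mathrm U,k)\varphi+\hat\upsilon(k)z\,\mathfrak d(k),\ \hat\upsilon(k)\langle\mathfrak d(k),\varphi\rangle+\mathfrak b(k)z\big)$. *)

theory Defs
  imports "HOL-Analysis.Analysis"
begin

text \<open>The torus T^2 is the box [-pi,pi) x [-pi,pi); the normalized Haar measure is
  Lebesgue measure on this box divided by (2 pi)^2.\<close>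

type_synonym mom = "real \<times> real"
type_synonym site = "int \<times> int"

definition dotp :: "mom \<Rightarrow> site \<Rightarrow> real" where
  "dotp k x = fst k * real_of_int (fst x) + snd k * real_of_int (snd x)"

definition TT :: "mom set" where
  "TT = {-pi..<pi} \<times> {-pi..<pi}"

definition rot90 :: "site \<Rightarrow> site" where
  "rot90 x = (- snd x, fst x)"

definition lnorm :: "site \<Rightarrow> real" where
  "lnorm z = sqrt ((real_of_int (fst z))^2 + (real_of_int (snd z))^2)"

definition cos2 :: "mom \<Rightarrow> real" where
  "cos2 q = cos (fst q) + cos (snd q)"

definition fhat :: "(site \<Rightarrow> real) \<Rightarrow> mom \<Rightarrow> complex" where
  "fhat f k = (\<Sum>\<^sub>\<infinity>x. exp (\<i> * complex_of_real (dotp k x)) * complex_of_real (f x))"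

definition ehat :: "site \<Rightarrow> mom \<Rightarrow> complex" where
  "ehat x p = exp (\<i> * complex_of_real (dotp p x))"

text \<open>L^2(T^2, nu), represented by Borel functions square integrable on the box
  (elements are identified up to nu-a.e. equality, see eqH).\<close>
definition L2T :: "(mom \<Rightarrow> complex) set" where
  "L2T = {\<phi>. \<phi> \<in> borel_measurable lborel \<and> set_integrable lborel TT (\<lambda>p. (cmod (\<phi> p))^2)}"

definition ipT :: "(mom \<Rightarrow> complex) \<Rightarrow> (mom \<Rightarrow> complex) \<Rightarrow> complex" where
  "ipT \<phi> \<psi> = complex_of_real (1 / (4 * pi^2)) * (LINT p:TT|lborel. cnj (\<phi> p) * \<psi> p)"

definition normT :: "(mom \<Rightarrow> complex) \<Rightarrow> real" where
  "normT \<phi> = sqrt ((1 / (4 * pi^2)) * (LINT p:TT|lborel. (cmod (\<phi> p))^2))"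

definition projT :: "site \<Rightarrow> (mom \<Rightarrow> complex) \<Rightarrow> (mom \<Rightarrow> complex)" where
  "projT x \<phi> = (\<lambda>p. ipT (ehat x) \<phi> * ehat x p)"

definition bfun :: "real \<Rightarrow> real \<Rightarrow> mom \<Rightarrow> real" where
  "bfun \<epsilon> hb k = hb * \<epsilon> * (2 - cos2 k)"

definition ffun :: "real \<Rightarrow> mom \<Rightarrow> mom \<Rightarrow> real" where
  "ffun \<epsilon> k p = \<epsilon> * (4 - cos2 (p + k) - cos2 p)"

definition dfun :: "(site \<Rightarrow> real) \<Rightarrow> (site \<Rightarrow> real) \<Rightarrow> mom \<Rightarrow> mom \<Rightarrow> complex" where
  "dfun p1 p2 k p = fhat p1 (k + p) + fhat p2 ((1/2) *\<^sub>R k + p)"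

definition A11 :: "real \<Rightarrow> (site \<Rightarrow> real) \<Rightarrow> real \<Rightarrow> mom \<Rightarrow> (mom \<Rightarrow> complex) \<Rightarrow> (mom \<Rightarrow> complex)" where
  "A11 \<epsilon> u U k \<phi> = (\<lambda>p. complex_of_real (ffun \<epsilon> k p) * \<phi> p
      + (\<Sum>\<^sub>\<infinity>x. complex_of_real (u x) * projT x \<phi> p)
      + complex_of_real U * projT 0 \<phi> p)"

definition Aop :: "real \<Rightarrow> real \<Rightarrow> (site \<Rightarrow> real) \<Rightarrow> (site \<Rightarrow> real) \<Rightarrow> (site \<Rightarrow> real) \<Rightarrow> (site \<Rightarrow> real)
    \<Rightarrow> real \<Rightarrow> mom \<Rightarrow> (mom \<Rightarrow> complex) \<times> complex \<Rightarrow> (mom \<Rightarrow> complex) \<times> complex" where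
  "Aop \<epsilon> hb u \<upsilon> p1 p2 U k v =
     ((\<lambda>p. A11 \<epsilon> u U k (fst v) p + fhat \<upsilon> k * snd v * dfun p1 p2 k p),
      fhat \<upsilon> k * ipT (dfun p1 p2 k) (fst v) + complex_of_real (bfun \<epsilon> hb k) * snd v)"

definition HT :: "((mom \<Rightarrow> complex) \<times> complex) set" where
  "HT = L2T \<times> UNIV"

definition normH :: "(mom \<Rightarrow> complex) \<times> complex \<Rightarrow> real" where
  "normH v = sqrt ((normT (fst v))^2 + (cmod (snd v))^2)"

definition eqH :: "(mom \<Rightarrow> complex) \<times> complex \<Rightarrow> (mom \<Rightarrow> complex) \<times> complex \<Rightarrow> bool" where
  "eqH v w = ((AE p in lborel. p \<in> TT \<longrightarrow> fst v p = fst w p) \<and> snd v = snd w)"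

definition shiftH :: "((mom \<Rightarrow> complex) \<times> complex \<Rightarrow> (mom \<Rightarrow> complex) \<times> complex) \<Rightarrow> complex
    \<Rightarrow> (mom \<Rightarrow> complex) \<times> complex \<Rightarrow> (mom \<Rightarrow> complex) \<times> complex" where
  "shiftH T lam v = ((\<lambda>p. fst (T v) p - lam * fst v p), snd (T v) - lam * snd v)"

text \<open>Spectrum: lambda is in the resolvent set iff T - lambda is a bijection of H
  (modulo null functions) with bounded inverse.\<close>
definition opspectrum :: "((mom \<Rightarrow> complex) \<times> complex \<Rightarrow> (mom \<Rightarrow> complex) \<times> complex) \<Rightarrow> complex set" where
  "opspectrum T = {lam. \<not> (\<exists>C. (\<forall>v\<in>HT. normH v \<le> C * normH (shiftH T lam v))
                          \<and> (\<forall>g\<in>HT. \<exists>v\<in>HT. eqH (shiftH T lam v) g))}"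

text \<open>E(U) = min_{k in T^2} min sigma(A(U,k)) (taken as infimum of the real spectrum)\<close>
definition Emin :: "real \<Rightarrow> real \<Rightarrow> (site \<Rightarrow> real) \<Rightarrow> (site \<Rightarrow> real) \<Rightarrow> (site \<Rightarrow> real) \<Rightarrow> (site \<Rightarrow> real)
    \<Rightarrow> real \<Rightarrow> real" where
  "Emin \<epsilon> hb u \<upsilon> p1 p2 U =
     Inf {t::real. \<exists>k\<in>TT. complex_of_real t \<in> opspectrum (Aop \<epsilon> hb u \<upsilon> p1 p2 U k)}"

end

theory Submission
  imports Defs
begin

lemma borel_measurable_cnj'[measurable]: assumes "f \<in> borel_measurable M" shows "(\<lambda>x. cnj (f x)) \<in> borel_measurable M"
proof -
  have "cnj \<in> borel_measurable borel" by (intro borel_measurable_continuous_onI continuous_intros)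
  from measurable_compose[OF assms this] show ?thesis by (simp add: o_def)
qed

definition MT :: "mom measure" where "MT = restrict_space lborel TT"

lemma TT_sets: "TT \<in> sets lborel"
proof -
  have "{-pi..<pi} \<times> {-pi..<pi::real} \<in> sets (lborel \<Otimes>\<^sub>M lborel)" by (rule pair_measureI) auto
  then show ?thesis unfolding TT_def lborel_prod .
qed
declare TT_sets[measurable]
lemma TT_borel[simp]: "TT \<in> sets borel" using TT_sets by simp

lemma TT_sets'[simp]: "TT \<inter> space lborel \<in> sets lborel" using TT_sets by simp

lemma space_MT[simp]: "space MT = TT"
  by (simp add: MT_def space_restrict_space)

lemma emeasure_TT: "emeasure lborel TT = ennreal (4*pi^2)"
proof -
  have "emeasure lborel TT = emeasure (lborel \<Otimes>\<^sub>M lborel) ({-pi..<pi} \<times> {-pi..<pi::real})"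
    unfolding TT_def lborel_prod by simp
  also have "\<dots> = emeasure lborel {-pi..<pi::real} * emeasure lborel {-pi..<pi::real}"
    by (rule lborel.emeasure_pair_measure_Times) auto
  also have "\<dots> = ennreal (4*pi^2)"
    by (simp add: ennreal_mult[symmetric] power2_eq_square)
  finally show ?thesis .
qed

lemma emeasure_MT: "emeasure MT TT = ennreal (4*pi^2)"
  unfolding MT_def by (subst emeasure_restrict_space) (auto simp: emeasure_TT space_restrict_space)

lemma measure_MT: "measure MT (space MT) = 4*pi^2"
  using emeasure_MT by (simp add: measure_def)
lemma measure_MT': "measure MT TT = 4*pi^2"
  using measure_MT by simp

interpretation MT: finite_measure MT
  by (rule finite_measureI) (simp add: emeasure_MT)

lemma LINT_MT: fixes f :: "mom \<Rightarrow> 'b::{banach, second_countable_topology}" shows "set_lebesgue_integral lborel TT f = integral\<^sup>L MT f"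
  unfolding set_lebesgue_integral_def MT_def by (simp add: integral_restrict_space)

lemma SI_MT: fixes f :: "mom \<Rightarrow> 'b::{banach, second_countable_topology}" shows "set_integrable lborel TT f \<longleftrightarrow> integrable MT f"
  unfolding set_integrable_def MT_def by (simp add: integrable_restrict_space)

lemma meas_MT: "f \<in> borel_measurable lborel \<Longrightarrow> f \<in> borel_measurable MT"
  unfolding MT_def by (rule measurable_restrict_space1)

definition c0 :: real where "c0 = 1 / (4*pi^2)"

lemma c0_pos: "c0 > 0" unfolding c0_def by simp

lemma L2T_iff: "\<phi> \<in> L2T \<longleftrightarrow> \<phi> \<in> borel_measurable lborel \<and> integrable MT (\<lambda>p. (cmod (\<phi> p))^2)"
  unfolding L2T_def by (simp add: SI_MT)

lemma ipT_MT: "ipT \<phi> \<psi> = complex_of_real c0 * integral\<^sup>L MT (\<lambda>p. cnj (\<phi> p) * \<psi> p)"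
  unfolding ipT_def c0_def by (simp add: LINT_MT)

lemma normT_MT: "normT \<phi> = sqrt (c0 * integral\<^sup>L MT (\<lambda>p. (cmod (\<phi> p))^2))"
  unfolding normT_def c0_def by (simp add: LINT_MT)

lemma L2T_meas: "\<phi> \<in> L2T \<Longrightarrow> \<phi> \<in> borel_measurable MT"
  by (simp add: L2T_iff meas_MT)

lemma L2T_sq: "\<phi> \<in> L2T \<Longrightarrow> integrable MT (\<lambda>p. (cmod (\<phi> p))^2)"
  by (simp add: L2T_iff)

lemma prod_le_sq: "(a::real) \<ge> 0 \<Longrightarrow> b \<ge> 0 \<Longrightarrow> a * b \<le> a^2 + b^2"
proof -
  assume a: "a \<ge> 0" and b: "b \<ge> 0"
  have "0 \<le> (a - b) * (a - b)" by simp
  moreover have "0 \<le> a * b" using a b by simp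
  ultimately show ?thesis by (simp add: power2_eq_square algebra_simps)
qed

lemma int_prod: assumes "\<phi> \<in> L2T" "\<psi> \<in> L2T"
  shows "integrable MT (\<lambda>p. cnj (\<phi> p) * \<psi> p)"
proof (rule Bochner_Integration.integrable_bound[where f="\<lambda>p. (cmod (\<phi> p))^2 + (cmod (\<psi> p))^2"])
  note [measurable] = L2T_meas[OF assms(1)] L2T_meas[OF assms(2)]
  show "integrable MT (\<lambda>p. (cmod (\<phi> p))^2 + (cmod (\<psi> p))^2)"
    using assms by (simp add: L2T_sq)
  show "(\<lambda>p. cnj (\<phi> p) * \<psi> p) \<in> borel_measurable MT"
    by measurable
  show "AE x in MT. norm (cnj (\<phi> x) * \<psi> x) \<le> norm ((cmod (\<phi> x))\<^sup>2 + (cmod (\<psi> x))\<^sup>2)"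
    by (auto simp: norm_mult intro!: prod_le_sq)
qed

lemma L2T_add: assumes "\<phi> \<in> L2T" "\<psi> \<in> L2T" shows "(\<lambda>p. \<phi> p + \<psi> p) \<in> L2T"
proof -
  have "integrable MT (\<lambda>p. (cmod (\<phi> p + \<psi> p))^2)"
  proof (rule Bochner_Integration.integrable_bound[where f="\<lambda>p. 2*(cmod (\<phi> p))^2 + 2*(cmod (\<psi> p))^2"])
    note [measurable] = L2T_meas[OF assms(1)] L2T_meas[OF assms(2)]
    show "integrable MT (\<lambda>p. 2*(cmod (\<phi> p))^2 + 2*(cmod (\<psi> p))^2)"
      using assms by (simp add: L2T_sq)
    show "(\<lambda>p. (cmod (\<phi> p + \<psi> p))^2) \<in> borel_measurable MT"
      by measurable
    have "(cmod (a + b))^2 \<le> 2*(cmod a)^2 + 2*(cmod b)^2" for a b :: complex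
    proof -
      have "cmod (a+b) \<le> cmod a + cmod b" by (rule norm_triangle_ineq)
      hence "(cmod (a+b))^2 \<le> (cmod a + cmod b)^2" by (simp add: power_mono)
      also have "\<dots> \<le> 2*(cmod a)^2 + 2*(cmod b)^2"
      proof -
        have "0 \<le> (cmod a - cmod b) * (cmod a - cmod b)" by simp
        then show ?thesis by (simp add: power2_eq_square algebra_simps)
      qed
      finally show ?thesis .
    qed
    then show "AE x in MT. norm ((cmod (\<phi> x + \<psi> x))^2) \<le> norm (2*(cmod (\<phi> x))^2 + 2*(cmod (\<psi> x))^2)"
      by auto
  qed
  moreover have "(\<lambda>p. \<phi> p + \<psi> p) \<in> borel_measurable lborel"
    using assms unfolding L2T_iff by (intro borel_measurable_add) auto
  ultimately show ?thesis by (simp add: L2T_iff)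
qed

lemma L2T_cmult: assumes "\<phi> \<in> L2T" shows "(\<lambda>p. c * \<phi> p) \<in> L2T"
proof -
  have "integrable MT (\<lambda>p. (cmod c)^2 * (cmod (\<phi> p))^2)"
    using assms by (simp add: L2T_sq)
  moreover have "(\<lambda>p. c * \<phi> p) \<in> borel_measurable lborel"
    using assms unfolding L2T_iff by (intro borel_measurable_times) auto
  ultimately show ?thesis by (simp add: L2T_iff norm_mult power_mult_distrib)
qed

lemma L2T_uminus: assumes "\<phi> \<in> L2T" shows "(\<lambda>p. - \<phi> p) \<in> L2T"
  using L2T_cmult[OF assms, of "-1"] by simp

lemma L2T_diff: assumes "\<phi> \<in> L2T" "\<psi> \<in> L2T" shows "(\<lambda>p. \<phi> p - \<psi> p) \<in> L2T"
  using L2T_add[OF assms(1) L2T_uminus[OF assms(2)]] by simp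

lemma L2T_bounded: assumes "f \<in> borel_measurable lborel" "\<And>p. cmod (f p) \<le> B"
  shows "f \<in> L2T"
proof -
  have "integrable MT (\<lambda>p. (cmod (f p))^2)"
  proof (rule MT.integrable_const_bound[where B="B^2"])
    show "AE x in MT. norm ((cmod (f x))\<^sup>2) \<le> B\<^sup>2"
    proof (intro AE_I2)
      fix x have "(cmod (f x))^2 \<le> B^2" by (rule power_mono[OF assms(2) norm_ge_zero])
      then show "norm ((cmod (f x))\<^sup>2) \<le> B\<^sup>2" by simp
    qed
    note [measurable] = meas_MT[OF assms(1)]
    show "(\<lambda>p. (cmod (f p))^2) \<in> borel_measurable MT"
      by measurable
  qed
  then show ?thesis using assms by (simp add: L2T_iff)
qed

lemma L2T_zero: "((\<lambda>p. 0) :: mom \<Rightarrow> complex) \<in> L2T"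
  by (rule L2T_bounded[where B=0]) auto

lemma ipT_cnj: "ipT \<psi> \<phi> = cnj (ipT \<phi> \<psi>)"
proof -
  have "(\<lambda>p. cnj (\<psi> p) * \<phi> p) = (\<lambda>p. cnj (cnj (\<phi> p) * \<psi> p))" by (auto simp: mult.commute)
  then have "integral\<^sup>L MT (\<lambda>p. cnj (\<psi> p) * \<phi> p) = integral\<^sup>L MT (\<lambda>p. cnj (cnj (\<phi> p) * \<psi> p))"
    by (simp only:)
  also have "\<dots> = cnj (integral\<^sup>L MT (\<lambda>p. cnj (\<phi> p) * \<psi> p))" by (rule Bochner_Integration.integral_cnj[of MT "\<lambda>p. cnj (\<phi> p) * \<psi> p"])
  finally have "integral\<^sup>L MT (\<lambda>p. cnj (\<psi> p) * \<phi> p) = cnj (integral\<^sup>L MT (\<lambda>p. cnj (\<phi> p) * \<psi> p))" .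
  then show ?thesis unfolding ipT_MT by simp
qed

lemma ipT_add2: assumes "\<phi> \<in> L2T" "\<psi> \<in> L2T" "\<eta> \<in> L2T"
  shows "ipT \<phi> (\<lambda>p. \<psi> p + \<eta> p) = ipT \<phi> \<psi> + ipT \<phi> \<eta>"
proof -
  have "integral\<^sup>L MT (\<lambda>p. cnj (\<phi> p) * (\<psi> p + \<eta> p))
     = integral\<^sup>L MT (\<lambda>p. cnj (\<phi> p) * \<psi> p) + integral\<^sup>L MT (\<lambda>p. cnj (\<phi> p) * \<eta> p)"
    using int_prod[OF assms(1,2)] int_prod[OF assms(1,3)]
    by (simp add: distrib_left)
  then show ?thesis unfolding ipT_MT by (simp add: distrib_left)
qed

lemma ipT_cmult2: "ipT \<phi> (\<lambda>p. c * \<psi> p) = c * ipT \<phi> \<psi>"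
proof -
  have "(\<lambda>p. cnj (\<phi> p) * (c * \<psi> p)) = (\<lambda>p. c * (cnj (\<phi> p) * \<psi> p))" by (auto simp: ac_simps)
  then show ?thesis unfolding ipT_MT by simp
qed

lemma cnj_mult_self: "cnj z * z = complex_of_real ((cmod z)^2)"
  using complex_norm_square[of z] by (simp add: mult.commute)

lemma ipT_self: assumes "\<phi> \<in> L2T" shows "ipT \<phi> \<phi> = complex_of_real ((normT \<phi>)^2)"
proof -
  have "integral\<^sup>L MT (\<lambda>p. cnj (\<phi> p) * \<phi> p) = integral\<^sup>L MT (\<lambda>p. complex_of_real ((cmod (\<phi> p))^2))"
    by (simp only: cnj_mult_self)
  also have "\<dots> = complex_of_real (integral\<^sup>L MT (\<lambda>p. (cmod (\<phi> p))^2))"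
    by (rule integral_complex_of_real)
  finally have 1: "integral\<^sup>L MT (\<lambda>p. cnj (\<phi> p) * \<phi> p) = complex_of_real (integral\<^sup>L MT (\<lambda>p. (cmod (\<phi> p))^2))" .
  have "integral\<^sup>L MT (\<lambda>p. (cmod (\<phi> p))^2) \<ge> 0" by (intro Bochner_Integration.integral_nonneg) simp
  then show ?thesis unfolding ipT_MT normT_MT 1 using c0_pos by simp
qed

lemma normT_nonneg: "normT \<phi> \<ge> 0"
proof -
  have "integral\<^sup>L MT (\<lambda>p. (cmod (\<phi> p))^2) \<ge> 0" by (intro Bochner_Integration.integral_nonneg) simp
  then show ?thesis unfolding normT_MT using c0_pos by simp
qed

lemma normT_zero_AE: assumes "\<phi> \<in> L2T" "normT \<phi> = 0"
  shows "AE p in lborel. p \<in> TT \<longrightarrow> \<phi> p = 0"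
proof -
  have "integral\<^sup>L MT (\<lambda>p. (cmod (\<phi> p))^2) \<ge> 0" by (intro Bochner_Integration.integral_nonneg) simp
  with assms have "integral\<^sup>L MT (\<lambda>p. (cmod (\<phi> p))^2) = 0"
    unfolding normT_MT using c0_pos by simp
  then have "AE p in MT. (cmod (\<phi> p))^2 = 0"
    using integral_nonneg_eq_0_iff_AE[OF L2T_sq[OF assms(1)]] by simp
  then have "AE p in MT. \<phi> p = 0" by simp
  then show ?thesis unfolding MT_def by (simp add: AE_restrict_space_iff)
qed

type_synonym V = "(mom \<Rightarrow> complex) \<times> complex"

definition vadd :: "V \<Rightarrow> V \<Rightarrow> V" where "vadd v w = ((\<lambda>p. fst v p + fst w p), snd v + snd w)"
definition vsc :: "complex \<Rightarrow> V \<Rightarrow> V" where "vsc c v = ((\<lambda>p. c * fst v p), c * snd v)"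
definition vdiff :: "V \<Rightarrow> V \<Rightarrow> V" where "vdiff v w = ((\<lambda>p. fst v p - fst w p), snd v - snd w)"
definition ipH :: "V \<Rightarrow> V \<Rightarrow> complex" where "ipH v w = ipT (fst v) (fst w) + cnj (snd v) * snd w"

lemma HT_iff: "v \<in> HT \<longleftrightarrow> fst v \<in> L2T" unfolding HT_def by (cases v) auto
lemma HT_vadd: "v \<in> HT \<Longrightarrow> w \<in> HT \<Longrightarrow> vadd v w \<in> HT"
  by (simp add: HT_iff vadd_def L2T_add)
lemma HT_vsc: "v \<in> HT \<Longrightarrow> vsc c v \<in> HT"
  by (simp add: HT_iff vsc_def L2T_cmult)
lemma HT_vdiff: "v \<in> HT \<Longrightarrow> w \<in> HT \<Longrightarrow> vdiff v w \<in> HT"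
  by (simp add: HT_iff vdiff_def L2T_diff)

lemma ipH_cnj: "ipH w v = cnj (ipH v w)"
  unfolding ipH_def by (simp add: ipT_cnj[of "fst w"] mult.commute)

lemma ipT_diff2: assumes "\<phi> \<in> L2T" "\<psi> \<in> L2T" "\<eta> \<in> L2T"
  shows "ipT \<phi> (\<lambda>p. \<psi> p - \<eta> p) = ipT \<phi> \<psi> - ipT \<phi> \<eta>"
proof -
  have "ipT \<phi> (\<lambda>p. \<psi> p + (-1) * \<eta> p) = ipT \<phi> \<psi> + ipT \<phi> (\<lambda>p. (-1) * \<eta> p)"
    by (rule ipT_add2[OF assms(1,2) L2T_cmult[OF assms(3)]])
  then show ?thesis by (simp add: ipT_cmult2[of _ "-1", simplified])
qed

lemma ipH_add2: "v \<in> HT \<Longrightarrow> w \<in> HT \<Longrightarrow> x \<in> HT \<Longrightarrow> ipH v (vadd w x) = ipH v w + ipH v x"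
  by (simp add: ipH_def vadd_def HT_iff ipT_add2 distrib_left)
lemma ipH_diff2: "v \<in> HT \<Longrightarrow> w \<in> HT \<Longrightarrow> x \<in> HT \<Longrightarrow> ipH v (vdiff w x) = ipH v w - ipH v x"
  by (simp add: ipH_def vdiff_def HT_iff ipT_diff2 right_diff_distrib)
lemma ipH_sc2: "ipH v (vsc c w) = c * ipH v w"
  by (simp add: ipH_def vsc_def ipT_cmult2 distrib_left)
lemma ipH_add1: "v \<in> HT \<Longrightarrow> w \<in> HT \<Longrightarrow> x \<in> HT \<Longrightarrow> ipH (vadd w x) v = ipH w v + ipH x v"
  by (subst (1 2 3) ipH_cnj) (simp add: ipH_add2)
lemma ipH_diff1: "v \<in> HT \<Longrightarrow> w \<in> HT \<Longrightarrow> x \<in> HT \<Longrightarrow> ipH (vdiff w x) v = ipH w v - ipH x v"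
  by (subst (1 2 3) ipH_cnj) (simp add: ipH_diff2)
lemma ipH_sc1: "ipH (vsc c w) v = cnj c * ipH w v"
  by (subst (1 2) ipH_cnj) (simp add: ipH_sc2)

lemma normH_nonneg: "normH v \<ge> 0" unfolding normH_def by simp

lemma normH_sq: "(normH v)^2 = (normT (fst v))^2 + (cmod (snd v))^2"
  unfolding normH_def by simp

lemma ipH_self: "v \<in> HT \<Longrightarrow> ipH v v = complex_of_real ((normH v)^2)"
  by (simp add: ipH_def normH_sq HT_iff ipT_self cnj_mult_self)

lemma normH_sq_Re: "v \<in> HT \<Longrightarrow> (normH v)^2 = Re (ipH v v)"
  by (simp add: ipH_self)

lemma normH_eq_0: "v \<in> HT \<Longrightarrow> normH v = 0 \<longleftrightarrow> normT (fst v) = 0 \<and> snd v = 0"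
  unfolding normH_def by (simp only: real_sqrt_eq_zero_cancel_iff sum_power2_eq_zero_iff norm_eq_zero)

lemma quad_disc:
  fixes a b c :: real
  assumes "\<And>t. 0 \<le> a + 2*t*b + t^2*c" "c \<ge> 0"
  shows "b^2 \<le> a*c"
proof (cases "c = 0")
  case True
  have "b = 0"
  proof (rule ccontr)
    assume "b \<noteq> 0"
    have "0 \<le> a + 2*(-(a+1)/(2*b))*b + (-(a+1)/(2*b))^2*c" by (rule assms(1))
    also have "\<dots> = -1" using \<open>b \<noteq> 0\<close> True by (simp add: field_simps)
    finally show False by simp
  qed
  then show ?thesis using True by simp
next
  case False
  then have c: "c > 0" using assms(2) by simp
  have "0 \<le> a + 2*(-b/c)*b + (-b/c)^2*c" by (rule assms(1))
  also have "\<dots> = a - b^2/c" using c by (simp add: field_simps power2_eq_square)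
  finally have "b^2/c \<le> a" by simp
  then show ?thesis using c by (simp add: field_simps)
qed

lemma normH_expand:
  assumes "v \<in> HT" "w \<in> HT"
  shows "(normH (vadd v (vsc (complex_of_real r) w)))^2
         = (normH v)^2 + 2*r*Re (ipH v w) + r^2*(normH w)^2"
proof -
  let ?w = "vsc (complex_of_real r) w"
  have w': "?w \<in> HT" using assms by (simp add: HT_vsc)
  have "complex_of_real ((normH (vadd v ?w))^2) = ipH (vadd v ?w) (vadd v ?w)"
    using assms w' by (simp add: ipH_self HT_vadd)
  also have "\<dots> = ipH v v + ipH v ?w + (ipH ?w v + ipH ?w ?w)"
    using assms w' by (simp add: ipH_add1 ipH_add2 HT_vadd)
  also have "\<dots> = ipH v v + complex_of_real r * ipH v w + (complex_of_real r * ipH w v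
        + complex_of_real r * complex_of_real r * ipH w w)"
    by (simp add: ipH_sc1 ipH_sc2)
  finally have "complex_of_real ((normH (vadd v ?w))^2) = \<dots>" .
  then have "(normH (vadd v ?w))^2 = Re (ipH v v + complex_of_real r * ipH v w + (complex_of_real r * ipH w v
        + complex_of_real r * complex_of_real r * ipH w w))"
    by (metis Re_complex_of_real)
  also have "\<dots> = (normH v)^2 + 2*r*Re (ipH v w) + r^2*(normH w)^2"
    using assms by (simp add: ipH_self ipH_cnj[of w v] power2_eq_square algebra_simps)
  finally show ?thesis .
qed

lemma CS_Re:
  assumes "v \<in> HT" "w \<in> HT"
  shows "(Re (ipH v w))^2 \<le> (normH v)^2 * (normH w)^2"
proof (rule quad_disc)
  fix t :: real
  show "0 \<le> (normH v)^2 + 2*t*Re (ipH v w) + t^2*(normH w)^2"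
    by (metis normH_expand[OF assms] zero_le_power2)
qed simp

lemma normH_vsc: assumes "v \<in> HT" shows "normH (vsc c v) = cmod c * normH v"
proof -
  have "(normH (vsc c v))^2 = Re (ipH (vsc c v) (vsc c v))"
    using assms by (simp add: normH_sq_Re HT_vsc)
  also have "ipH (vsc c v) (vsc c v) = cnj c * c * ipH v v" by (simp only: ipH_sc1 ipH_sc2 mult.assoc mult.left_commute)
  also have "cnj c * c * ipH v v = complex_of_real ((cmod c)^2 * (normH v)^2)" using assms
    by (simp only: cnj_mult_self ipH_self of_real_mult)
  also have "Re (complex_of_real ((cmod c)^2 * (normH v)^2)) = (cmod c)^2 * (normH v)^2"
    by (rule Re_complex_of_real)
  also have "\<dots> = (cmod c * normH v)^2" by (simp add: power_mult_distrib)
  finally show ?thesis using normH_nonneg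
    by (metis norm_ge_zero power2_eq_iff_nonneg zero_le_mult_iff)
qed

lemma CS:
  assumes "v \<in> HT" "w \<in> HT"
  shows "cmod (ipH v w) \<le> normH v * normH w"
proof (cases "ipH v w = 0")
  case True then show ?thesis using normH_nonneg by simp
next
  case False
  let ?z = "ipH v w"
  let ?c = "cnj ?z / complex_of_real (cmod ?z)"
  have cm: "cmod ?c = 1" using False by (simp add: norm_divide)
  have "ipH v (vsc ?c w) = ?c * ?z" by (simp add: ipH_sc2)
  also have "\<dots> = (cnj ?z * ?z) / complex_of_real (cmod ?z)" by (simp add: divide_inverse ac_simps)
  also have "\<dots> = complex_of_real ((cmod ?z)^2 / cmod ?z)" by (simp only: cnj_mult_self of_real_divide)
  also have "\<dots> = complex_of_real (cmod ?z)" using False by (simp add: power2_eq_square)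
  finally have e: "ipH v (vsc ?c w) = complex_of_real (cmod ?z)" .
  have "(cmod ?z)^2 \<le> (normH v)^2 * (normH (vsc ?c w))^2"
    using CS_Re[OF assms(1) HT_vsc[OF assms(2), of ?c]] e by simp
  also have "\<dots> = (normH v * normH w)^2" using assms cm by (simp add: normH_vsc power_mult_distrib)
  finally show ?thesis using normH_nonneg
    by (meson power2_le_imp_le zero_le_mult_iff)
qed

lemma vdiff_eq: "vdiff v w = vadd v (vsc (complex_of_real (-1)) w)"
  by (simp add: vdiff_def vadd_def vsc_def)

lemma triangle:
  assumes "v \<in> HT" "w \<in> HT"
  shows "normH (vadd v w) \<le> normH v + normH w"
proof -
  have "vadd v w = vadd v (vsc (complex_of_real 1) w)" by (simp add: vadd_def vsc_def)
  then have "(normH (vadd v w))^2 = (normH v)^2 + 2*Re (ipH v w) + (normH w)^2"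
    using normH_expand[OF assms, of 1] by simp
  also have "\<dots> \<le> (normH v)^2 + 2*(normH v * normH w) + (normH w)^2"
    using CS[OF assms] complex_Re_le_cmod[of "ipH v w"] by simp
  also have "\<dots> = (normH v + normH w)^2" by (simp add: power2_eq_square algebra_simps)
  finally show ?thesis using normH_nonneg
    by (meson add_nonneg_nonneg power2_le_imp_le)
qed

lemma normH_vdiff_sym: "normH (vdiff v w) = normH (vdiff w v)"
proof -
  have "normT (\<lambda>p. fst v p - fst w p) = normT (\<lambda>p. fst w p - fst v p)"
    unfolding normT_def by (simp add: norm_minus_commute)
  then show ?thesis unfolding normH_def vdiff_def by (simp add: norm_minus_commute)
qed

lemma triangle_diff:
  assumes "u \<in> HT" "v \<in> HT" "w \<in> HT"
  shows "normH (vdiff u w) \<le> normH (vdiff u v) + normH (vdiff v w)"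
proof -
  have "vdiff u w = vadd (vdiff u v) (vdiff v w)" by (simp add: vdiff_def vadd_def)
  then show ?thesis using triangle[OF HT_vdiff[OF assms(1,2)] HT_vdiff[OF assms(2,3)]] by simp
qed

lemma eqH_of_norm0:
  assumes "v \<in> HT" "g \<in> HT" "normH (vdiff v g) = 0"
  shows "eqH v g"
proof -
  have d: "vdiff v g \<in> HT" using assms by (simp add: HT_vdiff)
  then have "normT (fst (vdiff v g)) = 0" "snd (vdiff v g) = 0" using normH_eq_0[OF d] assms(3) by auto
  then have "AE p in lborel. p \<in> TT \<longrightarrow> fst (vdiff v g) p = 0" using normT_zero_AE d HT_iff by blast
  then show ?thesis using \<open>snd (vdiff v g) = 0\<close> unfolding eqH_def vdiff_def by auto
qed


lemma one_L2T: "(\<lambda>p::mom. 1::complex) \<in> L2T" by (rule L2T_bounded[where B=1]) auto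

lemma integral_one_MT: "integral\<^sup>L MT (\<lambda>p. 1::real) = 4*pi^2"
  by (simp, rule measure_MT')

lemma normT_one: "normT (\<lambda>p::mom. 1::complex) = 1"
  unfolding normT_MT norm_one power_one integral_one_MT c0_def by simp

lemma normH_fst0: "normH (\<phi>, 0) = normT \<phi>"
  unfolding normH_def using normT_nonneg by simp

lemma L2T_int: assumes "h \<in> L2T" shows "integrable MT h"
  using int_prod[OF one_L2T assms] by simp

lemma L2T_abs: assumes "h \<in> L2T" shows "(\<lambda>p. complex_of_real (cmod (h p))) \<in> L2T"
proof -
  have [measurable]: "h \<in> borel_measurable lborel" using assms L2T_iff by blast
  have "(\<lambda>p. complex_of_real (cmod (h p))) \<in> borel_measurable lborel" by measurable
  then show ?thesis using assms unfolding L2T_iff by simp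
qed

lemma L1_le_L2: assumes "h \<in> L2T" shows "c0 * integral\<^sup>L MT (\<lambda>p. cmod (h p)) \<le> normT h"
proof -
  let ?a = "(\<lambda>p. complex_of_real (cmod (h p)))"
  have a: "?a \<in> L2T" using L2T_abs[OF assms] .
  have "ipH ((\<lambda>p. 1), 0) (?a, 0) = ipT (\<lambda>p. 1) ?a" by (simp add: ipH_def)
  also have "\<dots> = complex_of_real c0 * integral\<^sup>L MT (\<lambda>p. complex_of_real (cmod (h p)))"
    by (simp add: ipT_MT)
  also have "\<dots> = complex_of_real (c0 * integral\<^sup>L MT (\<lambda>p. cmod (h p)))"
    by (simp only: integral_complex_of_real of_real_mult)
  finally have e: "ipH ((\<lambda>p. 1), 0) (?a, 0) = complex_of_real (c0 * integral\<^sup>L MT (\<lambda>p. cmod (h p)))" .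
  have "cmod (ipH ((\<lambda>p. 1), 0) (?a, 0)) \<le> normH ((\<lambda>p. 1), 0) * normH (?a, 0)"
    by (rule CS) (auto simp: HT_iff one_L2T a)
  also have "\<dots> = normT h" by (simp add: normH_fst0 normT_one normT_def)
  finally have "cmod (complex_of_real (c0 * integral\<^sup>L MT (\<lambda>p. cmod (h p)))) \<le> normT h" unfolding e .
  then have "\<bar>c0 * integral\<^sup>L MT (\<lambda>p. cmod (h p))\<bar> \<le> normT h" by (simp only: norm_of_real)
  then show ?thesis by linarith
qed

lemma L2T_complete:
  assumes s: "\<And>n. s n \<in> L2T"
    and C: "\<And>e. e>0 \<Longrightarrow> \<exists>N. \<forall>m\<ge>N. \<forall>n\<ge>N. normT (\<lambda>p. s m p - s n p) < e"
  shows "\<exists>\<phi>\<in>L2T. (\<lambda>n. normT (\<lambda>p. s n p - \<phi> p)) \<longlonglongrightarrow> 0"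
proof -
  have sm[measurable]: "\<And>n. s n \<in> borel_measurable lborel" using s L2T_iff by blast
  have sint: "\<And>n. integrable MT (s n)" using s L2T_int by blast
  have L1C: "\<exists>N. \<forall>i\<ge>N. \<forall>j\<ge>N. LINT x|MT. norm (s i x - s j x) < e" if e: "e > 0" for e
  proof -
    obtain N where N: "\<forall>m\<ge>N. \<forall>n\<ge>N. normT (\<lambda>p. s m p - s n p) < c0 * e"
      using C[of "c0*e"] e c0_pos by auto
    have "LINT x|MT. norm (s i x - s j x) < e" if "i \<ge> N" "j \<ge> N" for i j
    proof -
      have "c0 * (LINT x|MT. norm (s i x - s j x)) \<le> normT (\<lambda>p. s i p - s j p)"
        using L1_le_L2[OF L2T_diff[OF s s]] by simp
      also have "\<dots> < c0 * e" using N that by auto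
      finally show ?thesis using c0_pos by simp
    qed
    then show ?thesis by blast
  qed
  obtain r where r: "strict_mono r" "AE x in MT. Cauchy (\<lambda>i. s (r i) x)"
    using cauchy_L1_AE_cauchy_subseq[OF sint L1C] by blast
  define \<phi> where "\<phi> = (\<lambda>p. if p \<in> TT then lim (\<lambda>i. s (r i) p) else 0)"
  have \<phi>m[measurable]: "\<phi> \<in> borel_measurable lborel" unfolding \<phi>_def by measurable
  have conv: "AE x in MT. (\<lambda>i. s (r i) x) \<longlonglongrightarrow> \<phi> x"
    using r(2) AE_space[of MT]
    by eventually_elim (auto simp: \<phi>_def Cauchy_convergent_iff convergent_LIMSEQ_iff)
  have key: "\<exists>N. \<forall>n\<ge>N. (\<lambda>p. \<phi> p - s n p) \<in> L2T \<and> normT (\<lambda>p. \<phi> p - s n p) \<le> e" if e: "e > 0" for e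
  proof -
    obtain N where N: "\<forall>m\<ge>N. \<forall>n\<ge>N. normT (\<lambda>p. s m p - s n p) < e"
      using C[OF e] by auto
    have "(\<lambda>p. \<phi> p - s n p) \<in> L2T \<and> normT (\<lambda>p. \<phi> p - s n p) \<le> e" if n: "n \<ge> N" for n
    proof -
      let ?g = "\<lambda>i x. ennreal ((cmod (s (r i) x - s n x))^2)"
      have "(\<integral>\<^sup>+x. ennreal ((cmod (\<phi> x - s n x))^2) \<partial>MT) = (\<integral>\<^sup>+x. liminf (\<lambda>i. ?g i x) \<partial>MT)"
      proof (rule nn_integral_cong_AE)
        show "AE x in MT. ennreal ((cmod (\<phi> x - s n x))^2) = liminf (\<lambda>i. ?g i x)"
          using conv
        proof eventually_elim
          case (elim x)
          have "(\<lambda>i. ?g i x) \<longlonglongrightarrow> ennreal ((cmod (\<phi> x - s n x))^2)"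
            by (rule tendsto_ennrealI) (intro tendsto_intros elim)
          from lim_imp_Liminf[OF _ this] show ?case by simp
        qed
      qed
      also have "\<dots> \<le> liminf (\<lambda>i. \<integral>\<^sup>+x. ?g i x \<partial>MT)"
        by (rule nn_integral_liminf) (simp add: meas_MT)
      also have "\<dots> \<le> ennreal (e^2 / c0)"
      proof (rule Liminf_le)
        show "\<forall>\<^sub>F i in sequentially. (\<integral>\<^sup>+x. ?g i x \<partial>MT) \<le> ennreal (e^2 / c0)"
        proof (rule eventually_sequentiallyI[of N])
          fix i assume i: "N \<le> i"
          have ri: "r i \<ge> N" using seq_suble[OF r(1), of i] i by simp
          have d: "(\<lambda>p. s (r i) p - s n p) \<in> L2T" using L2T_diff[OF s s] .
          have "(\<integral>\<^sup>+x. ?g i x \<partial>MT) = ennreal (integral\<^sup>L MT (\<lambda>x. (cmod (s (r i) x - s n x))^2))"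
            by (rule nn_integral_eq_integral) (use L2T_sq[OF d] in auto)
          also have "integral\<^sup>L MT (\<lambda>x. (cmod (s (r i) x - s n x))^2) = (normT (\<lambda>p. s (r i) p - s n p))^2 / c0"
          proof -
            have "integral\<^sup>L MT (\<lambda>x. (cmod (s (r i) x - s n x))^2) \<ge> 0"
              by (intro Bochner_Integration.integral_nonneg) simp
            then show ?thesis unfolding normT_MT using c0_pos by simp
          qed
          also have "(normT (\<lambda>p. s (r i) p - s n p))^2 / c0 \<le> e^2 / c0"
          proof -
            have "normT (\<lambda>p. s (r i) p - s n p) < e" using N ri n by auto
            then have "(normT (\<lambda>p. s (r i) p - s n p))^2 \<le> e^2"
              using normT_nonneg by (intro power_mono) auto
            then show ?thesis using c0_pos by (simp add: divide_right_mono)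
          qed
          finally show "(\<integral>\<^sup>+x. ?g i x \<partial>MT) \<le> ennreal (e^2 / c0)" by (simp add: ennreal_leI)
        qed
      qed simp
      finally have fin: "(\<integral>\<^sup>+x. ennreal ((cmod (\<phi> x - s n x))^2) \<partial>MT) \<le> ennreal (e^2 / c0)" .
      have mm: "(\<lambda>x. (cmod (\<phi> x - s n x))^2) \<in> borel_measurable MT" by (simp add: meas_MT)
      have int: "integrable MT (\<lambda>x. (cmod (\<phi> x - s n x))^2)"
      proof (rule integrableI_bounded)
        show "(\<integral>\<^sup>+x. ennreal (norm ((cmod (\<phi> x - s n x))^2)) \<partial>MT) < \<infinity>"
          using fin by (simp add: le_less_trans)
      qed (rule mm)
      have "ennreal (integral\<^sup>L MT (\<lambda>x. (cmod (\<phi> x - s n x))^2)) = (\<integral>\<^sup>+x. ennreal ((cmod (\<phi> x - s n x))^2) \<partial>MT)"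
        by (rule nn_integral_eq_integral[symmetric]) (use int in auto)
      with fin have "ennreal (integral\<^sup>L MT (\<lambda>x. (cmod (\<phi> x - s n x))^2)) \<le> ennreal (e^2 / c0)" by simp
      then have le: "integral\<^sup>L MT (\<lambda>x. (cmod (\<phi> x - s n x))^2) \<le> e^2 / c0"
        using c0_pos by (simp add: ennreal_le_iff)
      have L: "(\<lambda>p. \<phi> p - s n p) \<in> L2T" using int unfolding L2T_iff by simp
      have "normT (\<lambda>p. \<phi> p - s n p) \<le> sqrt (c0 * (e^2 / c0))"
        unfolding normT_MT using le c0_pos by (intro real_sqrt_le_mono) (simp add: pos_le_divide_eq mult.commute)
      also have "\<dots> = e" using c0_pos e by simp
      finally show ?thesis using L by simp
    qed
    then show ?thesis by blast
  qed
  obtain N0 where N0: "\<forall>n\<ge>N0. (\<lambda>p. \<phi> p - s n p) \<in> L2T \<and> normT (\<lambda>p. \<phi> p - s n p) \<le> 1"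
    using key[of 1] by auto
  have "(\<lambda>p. (\<phi> p - s N0 p) + s N0 p) \<in> L2T" using N0 s L2T_add by blast
  then have \<phi>L: "\<phi> \<in> L2T" by simp
  have sym: "normT (\<lambda>p. s n p - \<phi> p) = normT (\<lambda>p. \<phi> p - s n p)" for n
    unfolding normT_def by (simp add: norm_minus_commute)
  have "(\<lambda>n. normT (\<lambda>p. s n p - \<phi> p)) \<longlonglongrightarrow> 0"
  proof (rule LIMSEQ_I)
    fix e :: real assume "e > 0"
    then obtain N where "\<forall>n\<ge>N. (\<lambda>p. \<phi> p - s n p) \<in> L2T \<and> normT (\<lambda>p. \<phi> p - s n p) \<le> e/2"
      using key[of "e/2"] by auto
    then have "\<forall>n\<ge>N. norm (normT (\<lambda>p. s n p - \<phi> p) - 0) < e"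
      using \<open>e > 0\<close> normT_nonneg by (auto simp: sym)
    then show "\<exists>no. \<forall>n\<ge>no. norm (normT (\<lambda>p. s n p - \<phi> p) - 0) < e" by blast
  qed
  then show ?thesis using \<phi>L by blast
qed

lemma HT_complete:
  assumes v: "\<And>n. v n \<in> HT"
    and C: "\<And>e. e>0 \<Longrightarrow> \<exists>N. \<forall>m\<ge>N. \<forall>n\<ge>N. normH (vdiff (v m) (v n)) < e"
  shows "\<exists>w\<in>HT. (\<lambda>n. normH (vdiff (v n) w)) \<longlonglongrightarrow> 0"
proof -
  have le1: "normT (fst (vdiff a b)) \<le> normH (vdiff a b)" for a b
    unfolding normH_def by (rule real_le_rsqrt) simp
  have le2: "cmod (snd (vdiff a b)) \<le> normH (vdiff a b)" for a b
    unfolding normH_def by (rule real_le_rsqrt) simp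
  have "\<exists>\<phi>\<in>L2T. (\<lambda>n. normT (\<lambda>p. fst (v n) p - \<phi> p)) \<longlonglongrightarrow> 0"
  proof (rule L2T_complete)
    show "fst (v n) \<in> L2T" for n using v HT_iff by blast
    fix e :: real assume "e > 0"
    then obtain N where N: "\<forall>m\<ge>N. \<forall>n\<ge>N. normH (vdiff (v m) (v n)) < e" using C by blast
    have "normT (\<lambda>p. fst (v m) p - fst (v n) p) < e" if "m \<ge> N" "n \<ge> N" for m n
      using le_less_trans[OF le1[of "v m" "v n"]] N that by (simp add: vdiff_def)
    then show "\<exists>N. \<forall>m\<ge>N. \<forall>n\<ge>N. normT (\<lambda>p. fst (v m) p - fst (v n) p) < e" by blast
  qed
  then obtain \<phi> where \<phi>: "\<phi> \<in> L2T" "(\<lambda>n. normT (\<lambda>p. fst (v n) p - \<phi> p)) \<longlonglongrightarrow> 0" by blast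
  have "Cauchy (\<lambda>n. snd (v n))"
  proof (rule CauchyI)
    fix e :: real assume "e > 0"
    then obtain N where N: "\<forall>m\<ge>N. \<forall>n\<ge>N. normH (vdiff (v m) (v n)) < e" using C by blast
    have "norm (snd (v m) - snd (v n)) < e" if "m \<ge> N" "n \<ge> N" for m n
      using le_less_trans[OF le2[of "v m" "v n"]] N that by (simp add: vdiff_def)
    then show "\<exists>M. \<forall>m\<ge>M. \<forall>n\<ge>M. norm (snd (v m) - snd (v n)) < e" by blast
  qed
  then obtain z where z: "(\<lambda>n. snd (v n)) \<longlonglongrightarrow> z" using Cauchy_convergent_iff convergent_def by blast
  have "(\<lambda>n. normH (vdiff (v n) (\<phi>, z))) = (\<lambda>n. sqrt ((normT (\<lambda>p. fst (v n) p - \<phi> p))^2 + (cmod (snd (v n) - z))^2))"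
    by (simp add: normH_def vdiff_def)
  moreover have "(\<lambda>n. sqrt ((normT (\<lambda>p. fst (v n) p - \<phi> p))^2 + (cmod (snd (v n) - z))^2)) \<longlonglongrightarrow> sqrt (0^2 + (cmod (z - z))^2)"
    by (intro tendsto_intros \<phi>(2) z)
  ultimately have "(\<lambda>n. normH (vdiff (v n) (\<phi>, z))) \<longlonglongrightarrow> 0" by simp
  then show ?thesis using \<phi>(1) by (auto simp: HT_iff)
qed

lemma normH_vdiff_self: "normH (vdiff v v) = 0"
  by (simp add: normH_def normT_def vdiff_def)

lemma zero_HT: "((\<lambda>p. 0), 0) \<in> HT"
  by (simp add: HT_iff L2T_zero)

lemma shiftH_eq: "shiftH T lam v = vdiff (T v) (vsc lam v)"
  by (simp add: shiftH_def vdiff_def vsc_def)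

lemma normH_vdiff_le: assumes "a \<in> HT" "b \<in> HT" shows "normH (vdiff a b) \<le> normH a + normH b"
proof -
  have "normH (vdiff a b) = normH (vadd a (vsc (complex_of_real (-1)) b))" by (simp add: vdiff_eq)
  also have "\<dots> \<le> normH a + normH (vsc (complex_of_real (-1)) b)"
    using assms by (intro triangle HT_vsc)
  also have "normH (vsc (complex_of_real (-1)) b) = normH b" using assms by (simp add: normH_vsc)
  finally show ?thesis .
qed

lemma geo_aux: "(1::real) - q \<noteq> 0 \<Longrightarrow> a*D + D*(b-a)/(1-q) = D*(b - q*a)/(1-q)"
  by (simp add: field_simps)

lemma Re_ipH_sym: "Re (ipH v w) = Re (ipH w v)"
  by (subst ipH_cnj) simp

locale sa_op =
  fixes T :: "V \<Rightarrow> V"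
  assumes T_closed: "v \<in> HT \<Longrightarrow> T v \<in> HT"
    and T_add: "v \<in> HT \<Longrightarrow> w \<in> HT \<Longrightarrow> T (vadd v w) = vadd (T v) (T w)"
    and T_sc: "v \<in> HT \<Longrightarrow> T (vsc c v) = vsc c (T v)"
    and T_bdd: "\<exists>L\<ge>0. \<forall>v\<in>HT. normH (T v) \<le> L * normH v"
    and T_sym: "v \<in> HT \<Longrightarrow> w \<in> HT \<Longrightarrow> Re (ipH v (T w)) = Re (ipH w (T v))"
begin

lemma T_diff: assumes "v \<in> HT" "w \<in> HT" shows "T (vdiff v w) = vdiff (T v) (T w)"
proof -
  have "T (vdiff v w) = T (vadd v (vsc (complex_of_real (-1)) w))" by (simp add: vdiff_eq)
  also have "\<dots> = vadd (T v) (vsc (complex_of_real (-1)) (T w))"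
    using assms by (simp add: T_add T_sc HT_vsc)
  also have "\<dots> = vdiff (T v) (T w)" by (simp add: vdiff_eq)
  finally show ?thesis .
qed

lemma coercive_bound:
  assumes c: "c > 0" and coer: "\<forall>v\<in>HT. c * (normH v)^2 \<le> Re (ipH v (T v))"
  shows "\<forall>v\<in>HT. normH v \<le> (1/c) * normH (T v)"
proof
  fix v assume v: "v \<in> HT"
  have "c * (normH v)^2 \<le> Re (ipH v (T v))" using coer v by blast
  also have "\<dots> \<le> cmod (ipH v (T v))" by (rule complex_Re_le_cmod)
  also have "\<dots> \<le> normH v * normH (T v)" by (rule CS[OF v T_closed[OF v]])
  finally have *: "c * (normH v)^2 \<le> normH v * normH (T v)" .
  show "normH v \<le> (1/c) * normH (T v)"
  proof (cases "normH v = 0")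
    case True then show ?thesis using normH_nonneg c by simp
  next
    case False
    then have "normH v > 0" using normH_nonneg[of v] by simp
    with * have "c * normH v \<le> normH (T v)" by (simp add: power2_eq_square mult.assoc)
    then show ?thesis using c by (simp add: field_simps)
  qed
qed

lemma coercive_surj:
  assumes c: "c > 0" and coer: "\<forall>v\<in>HT. c * (normH v)^2 \<le> Re (ipH v (T v))" and g: "g \<in> HT"
  shows "\<exists>v\<in>HT. eqH (T v) g"
proof -
  obtain L where L: "L \<ge> 0" "\<forall>v\<in>HT. normH (T v) \<le> L * normH v" using T_bdd by blast
  define L' where "L' = L + c"
  have L'pos: "L' > 0" "c \<le> L'" using L c by (auto simp: L'_def)
  define \<rho> where "\<rho> = c / L'^2"
  have \<rho>pos: "\<rho> > 0" using c L'pos by (simp add: \<rho>_def)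
  define q where "q = sqrt (1 - c^2/L'^2)"
  have "c^2 \<le> L'^2" using L'pos c by (intro power_mono) auto
  then have cL1: "c^2/L'^2 \<le> 1" using L'pos by (simp add: divide_le_eq_1)
  have cL2: "c^2/L'^2 > 0" using L'pos c by simp
  note cL = cL1 cL2
  have q: "0 \<le> q" "q < 1" using cL by (auto simp: q_def)
  have q2: "q^2 = 1 - c^2/L'^2" using cL by (simp add: q_def)
  define \<Phi> where "\<Phi> v = vadd v (vsc (complex_of_real \<rho>) (vdiff g (T v)))" for v
  have \<Phi>H: "\<Phi> v \<in> HT" if "v \<in> HT" for v
    using that g by (simp add: \<Phi>_def HT_vadd HT_vsc HT_vdiff T_closed)
  have contr: "normH (vdiff (\<Phi> v) (\<Phi> w)) \<le> q * normH (vdiff v w)" if v: "v \<in> HT" and w: "w \<in> HT" for v w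
  proof -
    let ?x = "vdiff v w"
    have x: "?x \<in> HT" using v w by (simp add: HT_vdiff)
    have eq: "vdiff (\<Phi> v) (\<Phi> w) = vadd ?x (vsc (complex_of_real (-\<rho>)) (T ?x))"
      unfolding T_diff[OF v w] by (simp add: \<Phi>_def vdiff_def vadd_def vsc_def fun_eq_iff algebra_simps)
    have "(normH (vdiff (\<Phi> v) (\<Phi> w)))^2
        = (normH ?x)^2 + 2*(-\<rho>)*Re (ipH ?x (T ?x)) + (-\<rho>)^2 * (normH (T ?x))^2"
      unfolding eq by (rule normH_expand[OF x T_closed[OF x]])
    also have "\<dots> \<le> (normH ?x)^2 - 2*\<rho>*(c*(normH ?x)^2) + \<rho>^2 * (L' * normH ?x)^2"
    proof -
      have "c*(normH ?x)^2 \<le> Re (ipH ?x (T ?x))" using coer x by blast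
      then have 1: "2*(-\<rho>)*Re (ipH ?x (T ?x)) \<le> - 2*\<rho>*(c*(normH ?x)^2)"
        using \<rho>pos by (simp add: mult_left_mono)
      have "normH (T ?x) \<le> L' * normH ?x"
        using L x normH_nonneg[of ?x] by (smt (verit, best) L'_def c mult_right_mono)
      then have "(normH (T ?x))^2 \<le> (L' * normH ?x)^2"
        using normH_nonneg by (intro power_mono) auto
      then have 2: "(-\<rho>)^2 * (normH (T ?x))^2 \<le> \<rho>^2 * (L' * normH ?x)^2"
        by (simp add: mult_left_mono)
      show ?thesis using 1 2 by simp
    qed
    also have "\<dots> = q^2 * (normH ?x)^2"
      unfolding q2 \<rho>_def using L'pos by (simp add: field_simps power2_eq_square)
    also have "\<dots> = (q * normH ?x)^2" by (simp add: power_mult_distrib)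
    finally show ?thesis using q normH_nonneg by (meson power2_le_imp_le mult_nonneg_nonneg)
  qed
  define vs where "vs n = (\<Phi> ^^ n) ((\<lambda>p. 0), 0)" for n
  have vsH: "vs n \<in> HT" for n
    by (induction n) (auto simp: vs_def zero_HT \<Phi>H)
  have vsSuc: "vs (Suc n) = \<Phi> (vs n)" for n by (simp add: vs_def)
  define D where "D = normH (vdiff (vs 1) (vs 0))"
  have D: "D \<ge> 0" by (simp add: D_def normH_nonneg)
  have step: "normH (vdiff (vs (Suc n)) (vs n)) \<le> q^n * D" for n
  proof (induction n)
    case 0 then show ?case by (simp add: D_def)
  next
    case (Suc n)
    have "normH (vdiff (vs (Suc (Suc n))) (vs (Suc n))) \<le> q * normH (vdiff (vs (Suc n)) (vs n))"
      using contr[OF vsH[of "Suc n"] vsH[of n]] by (simp only: vsSuc[symmetric])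
    also have "\<dots> \<le> q * (q^n * D)" using Suc q by (simp add: mult_left_mono)
    finally show ?case by simp
  qed
  have tail: "normH (vdiff (vs (n + k)) (vs n)) \<le> D * (q^n - q^(n+k)) / (1 - q)" for n k
  proof (induction k)
    case 0 then show ?case by (simp add: normH_vdiff_self)
  next
    case (Suc k)
    have "normH (vdiff (vs (n + Suc k)) (vs n))
        \<le> normH (vdiff (vs (Suc (n + k))) (vs (n+k))) + normH (vdiff (vs (n+k)) (vs n))"
      using triangle_diff[OF vsH vsH vsH] by simp
    also have "\<dots> \<le> q^(n+k) * D + D * (q^n - q^(n+k)) / (1 - q)"
      using step[of "n+k"] Suc by simp
    also have "\<dots> = D * (q^n - q * q^(n+k)) / (1 - q)"
      using q by (intro geo_aux) simp
    also have "q * q^(n+k) = q^(n + Suc k)" by simp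
    finally show ?case .
  qed
  have tail2: "normH (vdiff (vs m) (vs n)) \<le> D * q^n / (1 - q)" if "m \<ge> n" for m n
  proof -
    define k where "k = m - n"
    have m: "m = n + k" using that by (simp add: k_def)
    have 1: "normH (vdiff (vs m) (vs n)) \<le> D * (q^n - q^(n+k)) / (1 - q)" unfolding m by (rule tail)
    have "q^(n+k) \<ge> 0" using q(1) by (rule zero_le_power)
    then have "D * (q^n - q^(n+k)) \<le> D * q^n" using D by (simp add: mult_left_mono)
    then have "D * (q^n - q^(n+k)) / (1 - q) \<le> D * q^n / (1 - q)" using q(2) by (simp add: divide_right_mono)
    with 1 show ?thesis by linarith
  qed
  have Dq: "D * q^k \<ge> 0" for k using D q(1) by simp
  have q1: "1 - q > 0" using q(2) by simp
  have cauchy: "\<exists>N. \<forall>m\<ge>N. \<forall>n\<ge>N. normH (vdiff (vs m) (vs n)) < e" if e: "e > 0" for e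
  proof -
    have "(\<lambda>n. D * q^n / (1 - q)) \<longlonglongrightarrow> D * 0 / (1 - q)"
      using q by (intro tendsto_intros LIMSEQ_power_zero) auto
    then obtain N where N: "\<forall>n\<ge>N. norm (D * q^n / (1 - q) - 0) < e"
      using e by (auto simp: LIMSEQ_iff)
    have "normH (vdiff (vs m) (vs n)) < e" if mn: "m \<ge> N" "n \<ge> N" for m n
    proof (cases "m \<ge> n")
      case True
      have "D * q^n / (1 - q) < e" using N mn(2) Dq q1 by (auto simp: abs_of_nonneg abs_of_pos)
      then show ?thesis using tail2[OF True] by simp
    next
      case False
      have "D * q^m / (1 - q) < e" using N mn(1) Dq q1 by (auto simp: abs_of_nonneg abs_of_pos)
      moreover have "n \<ge> m" using False by simp
      ultimately show ?thesis using tail2[of m n] normH_vdiff_sym[of "vs m" "vs n"] by simp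
    qed
    then show ?thesis by blast
  qed
  obtain w where w: "w \<in> HT" "(\<lambda>n. normH (vdiff (vs n) w)) \<longlonglongrightarrow> 0"
    using HT_complete[OF vsH cauchy] by blast
  have fix0: "normH (vdiff (\<Phi> w) w) \<le> 0"
  proof (rule LIMSEQ_le_const)
    have "(\<lambda>n. q * normH (vdiff (vs n) w) + normH (vdiff (vs (Suc n)) w)) \<longlonglongrightarrow> q * 0 + 0"
      by (intro tendsto_intros w(2) LIMSEQ_Suc[OF w(2)])
    then show "(\<lambda>n. q * normH (vdiff (vs n) w) + normH (vdiff (vs (Suc n)) w)) \<longlonglongrightarrow> 0" by simp
    show "\<exists>N. \<forall>n\<ge>N. normH (vdiff (\<Phi> w) w) \<le> q * normH (vdiff (vs n) w) + normH (vdiff (vs (Suc n)) w)"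
    proof (intro exI allI impI)
      fix n
      have "normH (vdiff (\<Phi> w) w) \<le> normH (vdiff (\<Phi> w) (vs (Suc n))) + normH (vdiff (vs (Suc n)) w)"
        by (rule triangle_diff[OF \<Phi>H[OF w(1)] vsH w(1)])
      also have "normH (vdiff (\<Phi> w) (vs (Suc n))) \<le> q * normH (vdiff w (vs n))"
        unfolding vsSuc by (rule contr[OF w(1) vsH])
      also have "normH (vdiff w (vs n)) = normH (vdiff (vs n) w)" by (rule normH_vdiff_sym)
      finally show "normH (vdiff (\<Phi> w) w) \<le> q * normH (vdiff (vs n) w) + normH (vdiff (vs (Suc n)) w)"
        by simp
    qed
  qed
  have "vdiff (\<Phi> w) w = vsc (complex_of_real \<rho>) (vdiff g (T w))"
    by (simp add: \<Phi>_def vdiff_def vadd_def vsc_def fun_eq_iff)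
  then have "normH (vdiff (\<Phi> w) w) = \<rho> * normH (vdiff g (T w))"
    using g w(1) \<rho>pos by (simp add: normH_vsc HT_vdiff T_closed)
  then have "normH (vdiff g (T w)) = 0" using fix0 \<rho>pos normH_nonneg[of "vdiff g (T w)"]
    by (simp add: mult_le_0_iff)
  then have "normH (vdiff (T w) g) = 0" by (simp add: normH_vdiff_sym)
  then have "eqH (T w) g" using eqH_of_norm0 T_closed[OF w(1)] g by blast
  then show ?thesis using w(1) by blast
qed

lemma shift_sa: "sa_op (shiftH T (complex_of_real t))"
proof
  fix v w assume v: "v \<in> HT" and w: "w \<in> HT"
  show "shiftH T (complex_of_real t) (vadd v w) = vadd (shiftH T (complex_of_real t) v) (shiftH T (complex_of_real t) w)"
    unfolding shiftH_eq T_add[OF v w] by (simp add: vdiff_def vadd_def vsc_def fun_eq_iff algebra_simps)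
  show "Re (ipH v (shiftH T (complex_of_real t) w)) = Re (ipH w (shiftH T (complex_of_real t) v))"
    unfolding shiftH_eq using v w T_sym[OF v w] Re_ipH_sym[of v w]
    by (simp add: ipH_diff2 ipH_sc2 HT_vsc T_closed)
next
  fix v c assume v: "v \<in> HT"
  show "shiftH T (complex_of_real t) v \<in> HT" unfolding shiftH_eq using v by (simp add: HT_vdiff HT_vsc T_closed)
  show "shiftH T (complex_of_real t) (vsc c v) = vsc c (shiftH T (complex_of_real t) v)"
    unfolding shiftH_eq T_sc[OF v] by (simp add: vdiff_def vsc_def fun_eq_iff algebra_simps)
next
  obtain L where L: "L \<ge> 0" "\<forall>v\<in>HT. normH (T v) \<le> L * normH v" using T_bdd by blast
  have "normH (shiftH T (complex_of_real t) v) \<le> (L + \<bar>t\<bar>) * normH v" if v: "v \<in> HT" for v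
  proof -
    have "normH (shiftH T (complex_of_real t) v) \<le> normH (T v) + normH (vsc (complex_of_real t) v)"
      unfolding shiftH_eq using v by (intro normH_vdiff_le T_closed HT_vsc)
    also have "\<dots> \<le> L * normH v + \<bar>t\<bar> * normH v" using L v by (simp add: normH_vsc)
    finally show ?thesis by (simp add: algebra_simps)
  qed
  then show "\<exists>L\<ge>0. \<forall>v\<in>HT. normH (shiftH T (complex_of_real t) v) \<le> L * normH v"
    using L by (intro exI[of _ "L + \<bar>t\<bar>"]) auto
qed

lemma Re_shift: assumes "v \<in> HT"
  shows "Re (ipH v (shiftH T (complex_of_real t) v)) = Re (ipH v (T v)) - t * (normH v)^2"
  unfolding shiftH_eq using assms by (simp add: ipH_diff2 ipH_sc2 HT_vsc T_closed ipH_self)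

lemma form_CS:
  assumes pos: "\<forall>v\<in>HT. 0 \<le> Re (ipH v (T v))" and x: "x \<in> HT" and y: "y \<in> HT"
  shows "(Re (ipH x (T y)))^2 \<le> Re (ipH x (T x)) * Re (ipH y (T y))"
proof (rule quad_disc)
  fix t :: real
  let ?z = "vadd x (vsc (complex_of_real t) y)"
  have z: "?z \<in> HT" using x y by (simp add: HT_vadd HT_vsc)
  have Tz: "T ?z = vadd (T x) (vsc (complex_of_real t) (T y))"
    using x y by (simp add: T_add T_sc HT_vsc)
  have "ipH ?z (T ?z) = ipH x (T x) + complex_of_real t * ipH x (T y)
      + (complex_of_real t * ipH y (T x) + complex_of_real t * (complex_of_real t * ipH y (T y)))"
    unfolding Tz using x y by (simp add: ipH_add1 ipH_add2 ipH_sc1 ipH_sc2 HT_vsc HT_vadd T_closed distrib_left)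
  then have "Re (ipH ?z (T ?z)) = Re (ipH x (T x)) + 2*t*Re (ipH x (T y)) + t^2 * Re (ipH y (T y))"
    using T_sym[OF x y] by (simp add: power2_eq_square algebra_simps)
  then show "0 \<le> Re (ipH x (T x)) + 2*t*Re (ipH x (T y)) + t^2 * Re (ipH y (T y))"
    using pos z by metis
qed (use pos y in auto)

lemma approx_eigen:
  assumes pos: "\<forall>v\<in>HT. 0 \<le> Re (ipH v (T v))"
    and small: "\<And>\<delta>. \<delta> > 0 \<Longrightarrow> \<exists>v\<in>HT. normH v = 1 \<and> Re (ipH v (T v)) < \<delta>"
  shows "\<not> (\<exists>C. \<forall>v\<in>HT. normH v \<le> C * normH (T v))"
proof
  assume "\<exists>C. \<forall>v\<in>HT. normH v \<le> C * normH (T v)"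
  then obtain C where C: "\<forall>v\<in>HT. normH v \<le> C * normH (T v)" by blast
  obtain L where L: "L \<ge> 0" "\<forall>v\<in>HT. normH (T v) \<le> L * normH v" using T_bdd by blast
  define \<delta> where "\<delta> = 1 / (C^2 * L + 1)"
  have CL: "C^2 * L \<ge> 0" using L by simp
  have dpos: "\<delta> > 0" using CL unfolding \<delta>_def by (simp add: add_pos_nonneg)
  obtain v where v: "v \<in> HT" "normH v = 1" "Re (ipH v (T v)) < \<delta>" using small[OF dpos] by blast
  let ?y = "T v"
  have y: "?y \<in> HT" using v T_closed by blast
  have b1: "Re (ipH v (T ?y)) = (normH ?y)^2"
    using T_sym[OF v(1) y] y by (simp add: normH_sq_Re)
  have "Re (ipH ?y (T ?y)) \<le> cmod (ipH ?y (T ?y))" by (rule complex_Re_le_cmod)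
  also have "\<dots> \<le> normH ?y * normH (T ?y)" by (rule CS[OF y T_closed[OF y]])
  also have "\<dots> \<le> normH ?y * (L * normH ?y)" using L y normH_nonneg by (simp add: mult_left_mono)
  finally have b2: "Re (ipH ?y (T ?y)) \<le> L * (normH ?y)^2" by (simp add: power2_eq_square ac_simps)
  have "((normH ?y)^2)^2 \<le> Re (ipH v (T v)) * Re (ipH ?y (T ?y))"
    using form_CS[OF pos v(1) y] b1 by simp
  also have "\<dots> \<le> \<delta> * (L * (normH ?y)^2)"
    using v(3) b2 pos v(1) y by (intro mult_mono) auto
  finally have *: "((normH ?y)^2)^2 \<le> \<delta> * L * (normH ?y)^2" by (simp add: ac_simps)
  have ny: "(normH ?y)^2 \<le> \<delta> * L"
  proof (cases "normH ?y = 0")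
    case True then show ?thesis using dpos L by simp
  next
    case False
    then have "(normH ?y)^2 > 0" by simp
    have "(normH ?y)^2 * (normH ?y)^2 \<le> (\<delta> * L) * (normH ?y)^2" using * by (metis power2_eq_square)
    from mult_right_le_imp_le[OF this \<open>(normH ?y)^2 > 0\<close>] show ?thesis .
  qed
  have "1 \<le> C * normH ?y" using C v by auto
  then have "1 \<le> (C * normH ?y)^2" by (simp add: one_le_power)
  also have "\<dots> = C^2 * (normH ?y)^2" by (simp add: power_mult_distrib)
  also have "\<dots> \<le> C^2 * (\<delta> * L)" using ny by (simp add: mult_left_mono)
  also have "\<dots> < 1" using CL unfolding \<delta>_def by (simp add: field_simps)
  finally show False by simp
qed

lemma not_in_spec:
  assumes c: "c > 0" and coer: "\<forall>v\<in>HT. (t + c) * (normH v)^2 \<le> Re (ipH v (T v))"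
  shows "complex_of_real t \<notin> opspectrum T"
proof -
  interpret B: sa_op "shiftH T (complex_of_real t)" by (rule shift_sa)
  have coerB: "\<forall>v\<in>HT. c * (normH v)^2 \<le> Re (ipH v (shiftH T (complex_of_real t) v))"
    using coer by (simp add: Re_shift algebra_simps)
  show ?thesis unfolding opspectrum_def
    using B.coercive_bound[OF c coerB] B.coercive_surj[OF c coerB] by blast
qed

lemma in_spec:
  assumes lb: "\<forall>v\<in>HT. t * (normH v)^2 \<le> Re (ipH v (T v))"
    and small: "\<And>\<delta>. \<delta> > 0 \<Longrightarrow> \<exists>v\<in>HT. normH v = 1 \<and> Re (ipH v (T v)) < t + \<delta>"
  shows "complex_of_real t \<in> opspectrum T"
proof -
  interpret B: sa_op "shiftH T (complex_of_real t)" by (rule shift_sa)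
  have posB: "\<forall>v\<in>HT. 0 \<le> Re (ipH v (shiftH T (complex_of_real t) v))"
    using lb by (simp add: Re_shift)
  have smallB: "\<exists>v\<in>HT. normH v = 1 \<and> Re (ipH v (shiftH T (complex_of_real t) v)) < \<delta>" if "\<delta> > 0" for \<delta>
    using small[OF that] by (auto simp: Re_shift)
  show ?thesis unfolding opspectrum_def
    using B.approx_eigen[OF posB smallB] by blast
qed

end

lemma ehat_meas[measurable]: "ehat x \<in> borel_measurable lborel"
proof -
  have "(\<lambda>p::mom. ehat x p) \<in> borel_measurable lborel" unfolding ehat_def dotp_def
    by (simp, intro borel_measurable_continuous_onI continuous_intros)
  then show ?thesis by simp
qed

lemma cmod_ehat[simp]: "cmod (ehat x p) = 1"
  unfolding ehat_def by (rule norm_exp_i_times)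

lemma ehat_L2T: "ehat x \<in> L2T"
  by (rule L2T_bounded[where B=1]) auto

lemma normT_ehat: "normT (ehat x) = 1"
  unfolding normT_MT cmod_ehat power_one integral_one_MT c0_def by simp

lemma ipT_bound: assumes "\<phi> \<in> L2T" "\<psi> \<in> L2T" shows "cmod (ipT \<phi> \<psi>) \<le> normT \<phi> * normT \<psi>"
proof -
  have "cmod (ipH (\<phi>, 0) (\<psi>, 0)) \<le> normH (\<phi>, 0) * normH (\<psi>, 0)"
    by (rule CS) (auto simp: HT_iff assms)
  then show ?thesis by (simp add: ipH_def normH_fst0)
qed

lemma ipT_ehat_bound: assumes "\<psi> \<in> L2T" shows "cmod (ipT \<psi> (ehat x)) \<le> normT \<psi>"
  using ipT_bound[OF assms ehat_L2T] by (simp add: normT_ehat)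

lemma ipT_ehat_bound': assumes "\<psi> \<in> L2T" shows "cmod (ipT (ehat x) \<psi>) \<le> normT \<psi>"
  using ipT_bound[OF ehat_L2T assms] by (simp add: normT_ehat)

definition absS :: "(site \<Rightarrow> complex) \<Rightarrow> bool" where
  "absS a \<longleftrightarrow> (\<lambda>x. cmod (a x)) summable_on UNIV"

definition nsum :: "(site \<Rightarrow> complex) \<Rightarrow> real" where
  "nsum a = (\<Sum>\<^sub>\<infinity>x. cmod (a x))"

definition ser :: "(site \<Rightarrow> complex) \<Rightarrow> mom \<Rightarrow> complex" where
  "ser a p = (\<Sum>\<^sub>\<infinity>x. a x * ehat x p)"

lemma absS_summable: "absS a \<Longrightarrow> a summable_on UNIV"
  unfolding absS_def by (simp add: summable_on_iff_abs_summable_on_complex)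

lemma absS_comp: assumes "absS b" "\<And>x. cmod (a x) \<le> C * cmod (b x)" shows "absS a"
proof -
  have "(\<lambda>x. C * cmod (b x)) summable_on UNIV"
    using assms(1) unfolding absS_def by (intro summable_on_cmult_right)
  then show ?thesis unfolding absS_def
    by (rule summable_on_comparison_test) (use assms(2) in auto)
qed

lemma absS_add: "absS a \<Longrightarrow> absS b \<Longrightarrow> absS (\<lambda>x. a x + b x)"
proof -
  assume a: "absS a" and b: "absS b"
  have "(\<lambda>x. cmod (a x) + cmod (b x)) summable_on UNIV"
    using a b unfolding absS_def by (intro summable_on_add)
  then show ?thesis unfolding absS_def
    by (rule summable_on_comparison_test) (auto intro: norm_triangle_ineq)
qed

lemma absS_cmult: "absS a \<Longrightarrow> absS (\<lambda>x. c * a x)"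
  by (rule absS_comp[where C="cmod c"]) (auto simp: norm_mult)

lemma absS_term: assumes "absS a" shows "(\<lambda>x. a x * ehat x p) summable_on UNIV"
proof -
  have "absS (\<lambda>x. a x * ehat x p)" by (rule absS_comp[OF assms, where C=1]) (simp add: norm_mult)
  then show ?thesis by (rule absS_summable)
qed

lemma nsum_nonneg: "nsum a \<ge> 0"
  unfolding nsum_def by (rule infsum_nonneg) simp

lemma ser_bound: assumes "absS a" shows "cmod (ser a p) \<le> nsum a"
proof -
  have "(\<lambda>x. norm (a x * ehat x p)) summable_on UNIV"
    using assms unfolding absS_def by (simp add: norm_mult)
  then have "cmod (ser a p) \<le> (\<Sum>\<^sub>\<infinity>x. cmod (a x * ehat x p))"
    unfolding ser_def by (intro norm_infsum_bound)
  also have "\<dots> = nsum a" unfolding nsum_def by (simp add: norm_mult)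
  finally show ?thesis .
qed

definition enum :: "nat \<Rightarrow> site" where "enum = from_nat_into (UNIV :: site set)"

lemma enum_bij: "bij_betw enum UNIV UNIV"
  unfolding enum_def
  by (rule bij_betw_from_nat_into) (auto simp: infinite_UNIV_char_0 finite_prod)

lemma sums_enum:
  fixes f :: "site \<Rightarrow> 'a::{real_normed_vector}"
  assumes "f summable_on UNIV"
  shows "(\<lambda>n. f (enum n)) sums infsum f UNIV"
proof -
  have "(f has_sum infsum f UNIV) UNIV" using assms by (rule has_sum_infsum)
  then have "((\<lambda>n. f (enum n)) has_sum infsum f UNIV) UNIV"
    using has_sum_reindex_bij_betw[OF enum_bij] by blast
  then show ?thesis by (rule has_sum_imp_sums)
qed

lemma ser_meas: assumes "absS a" shows "ser a \<in> borel_measurable lborel"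
proof -
  have pm: "(\<lambda>p. \<Sum>n<N. a (enum n) * ehat (enum n) p) \<in> borel_measurable lborel" for N
    by (intro borel_measurable_sum borel_measurable_times borel_measurable_const ehat_meas)
  have lim: "(\<lambda>N. \<Sum>n<N. a (enum n) * ehat (enum n) p) \<longlonglongrightarrow> ser a p" for p
    using sums_enum[OF absS_term[OF assms, of p]] unfolding ser_def sums_def .
  show ?thesis by (rule borel_measurable_LIMSEQ_metric[OF pm lim])
qed

lemma ser_L2T: assumes "absS a" shows "ser a \<in> L2T"
  by (rule L2T_bounded[OF ser_meas[OF assms] ser_bound[OF assms]])

lemma ser_add: assumes "absS a" "absS b" shows "ser (\<lambda>x. a x + b x) p = ser a p + ser b p"
  unfolding ser_def distrib_right by (rule infsum_add) (auto intro: absS_term assms)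

lemma ser_cmult: assumes "absS a" shows "ser (\<lambda>x. c * a x) p = c * ser a p"
  unfolding ser_def mult.assoc by (rule infsum_cmult_right) (auto intro: absS_term assms)

lemma ipT_ser:
  assumes a: "absS a" and \<psi>: "\<psi> \<in> L2T"
  shows "ipT \<psi> (ser a) = (\<Sum>\<^sub>\<infinity>x. a x * ipT \<psi> (ehat x))"
proof -
  define F where "F n p = cnj (\<psi> p) * (a (enum n) * ehat (enum n) p)" for n p
  have sa: "(\<lambda>n. cmod (a (enum n))) sums nsum a"
    using sums_enum[of "\<lambda>x. cmod (a x)"] a unfolding absS_def nsum_def by blast
  have ser_eq: "ser a p = (\<Sum>n. a (enum n) * ehat (enum n) p)" for p
    using sums_enum[OF absS_term[OF a, of p]] unfolding ser_def by (simp add: sums_iff)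
  have summ: "summable (\<lambda>n. a (enum n) * ehat (enum n) p)" for p
    using sums_enum[OF absS_term[OF a, of p]] by (simp add: sums_iff)
  have "cnj (\<psi> p) * ser a p = (\<Sum>n. F n p)" for p
    unfolding ser_eq F_def by (rule suminf_mult[OF summ, symmetric])
  then have 1: "integral\<^sup>L MT (\<lambda>p. cnj (\<psi> p) * ser a p) = integral\<^sup>L MT (\<lambda>p. \<Sum>n. F n p)" by simp
  have intF: "integrable MT (F n)" for n
  proof -
    have "integrable MT (\<lambda>p. a (enum n) * (cnj (\<psi> p) * ehat (enum n) p))"
      using int_prod[OF \<psi> ehat_L2T] by simp
    then show ?thesis unfolding F_def by (simp add: ac_simps)
  qed
  have nF: "norm (F n p) = cmod (\<psi> p) * cmod (a (enum n))" for n p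
    by (simp add: F_def norm_mult)
  have intpsi: "integrable MT (\<lambda>p. cmod (\<psi> p))" using L2T_int[OF \<psi>] by simp
  have "integral\<^sup>L MT (\<lambda>p. \<Sum>n. F n p) = (\<Sum>n. integral\<^sup>L MT (F n))"
  proof (rule integral_suminf)
    show "integrable MT (F i)" for i by (rule intF)
    show "AE x in MT. summable (\<lambda>i. norm (F i x))"
      unfolding nF using sa by (intro AE_I2 summable_mult) (simp add: sums_iff)
    show "summable (\<lambda>i. LINT x|MT. norm (F i x))"
      unfolding nF using sa by (simp add: summable_mult2 sums_iff)
  qed
  also have "\<dots> = (\<Sum>n. a (enum n) * integral\<^sup>L MT (\<lambda>p. cnj (\<psi> p) * ehat (enum n) p))"
  proof -
    have "(\<lambda>p. F n p) = (\<lambda>p. a (enum n) * (cnj (\<psi> p) * ehat (enum n) p))" for n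
      unfolding F_def by (simp add: ac_simps)
    then show ?thesis by simp
  qed
  finally have 2: "integral\<^sup>L MT (\<lambda>p. cnj (\<psi> p) * ser a p)
      = (\<Sum>n. a (enum n) * integral\<^sup>L MT (\<lambda>p. cnj (\<psi> p) * ehat (enum n) p))" using 1 by simp
  have absb: "absS (\<lambda>x. a x * ipT \<psi> (ehat x))"
    by (rule absS_comp[OF a, where C="normT \<psi>"])
       (simp add: norm_mult, metis ipT_ehat_bound[OF \<psi>] mult.commute mult_left_mono norm_ge_zero)
  have "(\<lambda>n. a (enum n) * ipT \<psi> (ehat (enum n))) sums (\<Sum>\<^sub>\<infinity>x. a x * ipT \<psi> (ehat x))"
    by (rule sums_enum[OF absS_summable[OF absb]])
  then have "(\<Sum>\<^sub>\<infinity>x. a x * ipT \<psi> (ehat x)) = (\<Sum>n. a (enum n) * ipT \<psi> (ehat (enum n)))"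
    by (simp add: sums_iff)
  also have "\<dots> = (\<Sum>n. complex_of_real c0 * (a (enum n) * integral\<^sup>L MT (\<lambda>p. cnj (\<psi> p) * ehat (enum n) p)))"
    unfolding ipT_MT by (simp add: ac_simps)
  also have "\<dots> = complex_of_real c0 * (\<Sum>n. a (enum n) * integral\<^sup>L MT (\<lambda>p. cnj (\<psi> p) * ehat (enum n) p))"
  proof (rule suminf_mult)
    have "(\<lambda>n. a (enum n) * ipT \<psi> (ehat (enum n))) sums (\<Sum>\<^sub>\<infinity>x. a x * ipT \<psi> (ehat x))"
      by (rule sums_enum[OF absS_summable[OF absb]])
    then have "summable (\<lambda>n. complex_of_real (1/c0) * (a (enum n) * ipT \<psi> (ehat (enum n))))"
      by (intro summable_mult) (simp add: sums_iff)
    then show "summable (\<lambda>n. a (enum n) * integral\<^sup>L MT (\<lambda>p. cnj (\<psi> p) * ehat (enum n) p))"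
      unfolding ipT_MT using c0_pos by (simp add: ac_simps)
  qed
  also have "\<dots> = ipT \<psi> (ser a)" unfolding ipT_MT 2 ..
  finally show ?thesis ..
qed

lemma dotp_add: "dotp (k + p) x = dotp k x + dotp p x"
  unfolding dotp_def by (simp add: algebra_simps)

lemma dotp_uminus: "dotp k (- x) = - dotp k x"
  unfolding dotp_def by simp

lemma exp_i_add: "exp (\<i> * complex_of_real (a + b)) = exp (\<i> * complex_of_real a) * exp (\<i> * complex_of_real b)"
  by (simp add: distrib_left exp_add)

lemma cnj_exp_i: "cnj (exp (\<i> * complex_of_real t)) = exp (\<i> * complex_of_real (- t))"
  by (simp add: exp_cnj)

lemma cmod_exp_i[simp]: "cmod (exp (\<i> * complex_of_real t)) = 1"
  by (rule norm_exp_i_times)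

lemma fhat_real:
  assumes sym: "\<And>x. w (- x) = w x"
  shows "fhat w k = complex_of_real (Re (fhat w k))"
proof -
  let ?F = "\<lambda>x. exp (\<i> * complex_of_real (dotp k x)) * complex_of_real (w x)"
  have "cnj (fhat w k) = infsum (\<lambda>x. cnj (?F x)) UNIV" unfolding fhat_def by (rule infsum_cnj[symmetric])
  also have "(\<lambda>x. cnj (?F x)) = ?F \<circ> uminus"
    by (rule ext) (simp add: cnj_exp_i dotp_uminus sym)
  also have "infsum (?F \<circ> uminus) UNIV = infsum ?F (uminus ` UNIV)"
    by (rule infsum_reindex[symmetric]) simp
  also have "uminus ` (UNIV :: site set) = UNIV" by (simp add: surj_def)
  finally have "cnj (fhat w k) = fhat w k" unfolding fhat_def by simp
  then show ?thesis by (simp add: complex_eq_iff)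
qed

lemma summable_abs_real_absS: "(\<lambda>x. \<bar>w x\<bar>) summable_on UNIV \<Longrightarrow> absS (\<lambda>x. complex_of_real (w x))"
  unfolding absS_def by simp

lemma norm_fhat: assumes "(\<lambda>x. \<bar>w x\<bar>) summable_on UNIV"
  shows "cmod (fhat w k) \<le> (\<Sum>\<^sub>\<infinity>x. \<bar>w x\<bar>)"
proof -
  have "(\<lambda>x. norm (exp (\<i> * complex_of_real (dotp k x)) * complex_of_real (w x))) summable_on UNIV"
    using assms by (simp add: norm_mult)
  then have "cmod (fhat w k) \<le> (\<Sum>\<^sub>\<infinity>x. norm (exp (\<i> * complex_of_real (dotp k x)) * complex_of_real (w x)))"
    unfolding fhat_def by (intro norm_infsum_bound)
  then show ?thesis by (simp add: norm_mult)
qed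

definition bco :: "(site \<Rightarrow> real) \<Rightarrow> mom \<Rightarrow> site \<Rightarrow> complex" where
  "bco w k x = exp (\<i> * complex_of_real (dotp k x)) * complex_of_real (w x)"

lemma absS_bco: "(\<lambda>x. \<bar>w x\<bar>) summable_on UNIV \<Longrightarrow> absS (bco w k)"
  unfolding absS_def bco_def by (simp add: norm_mult)

lemma nsum_bco: "nsum (bco w k) = (\<Sum>\<^sub>\<infinity>x. \<bar>w x\<bar>)"
  unfolding nsum_def bco_def by (simp add: norm_mult)

lemma fhat_shift: "fhat w (k + p) = ser (bco w k) p"
  unfolding fhat_def ser_def bco_def ehat_def
  by (rule infsum_cong) (simp add: dotp_add distrib_left exp_add ac_simps)

lemma dfun_ser: "dfun p1 p2 k = (\<lambda>p. ser (bco p1 k) p + ser (bco p2 ((1/2) *\<^sub>R k)) p)"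
  unfolding dfun_def by (simp add: fhat_shift)


lemma normT_cmult: "normT (\<lambda>p. c * \<phi> p) = cmod c * normT \<phi>"
proof -
  have "normT (\<lambda>p. c * \<phi> p) = sqrt ((cmod c)^2 * (c0 * integral\<^sup>L MT (\<lambda>p. (cmod (\<phi> p))^2)))"
    unfolding normT_MT by (simp add: norm_mult power_mult_distrib ac_simps)
  also have "\<dots> = cmod c * normT \<phi>" unfolding normT_MT by (simp add: real_sqrt_mult)
  finally show ?thesis .
qed

lemma normT_add: assumes "\<phi> \<in> L2T" "\<psi> \<in> L2T" shows "normT (\<lambda>p. \<phi> p + \<psi> p) \<le> normT \<phi> + normT \<psi>"
proof -
  have "normH (vadd (\<phi>, 0) (\<psi>, 0)) \<le> normH (\<phi>, 0) + normH (\<psi>, 0)"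
    by (rule triangle) (auto simp: HT_iff assms)
  then show ?thesis by (simp add: vadd_def normH_fst0)
qed

lemma normT_le_normH: "normT \<phi> \<le> normH (\<phi>, z)"
  unfolding normH_def by (rule real_le_rsqrt) simp

lemma cmod_le_normH: "cmod z \<le> normH (\<phi>, z)"
  unfolding normH_def by (rule real_le_rsqrt) simp

lemma normH_le_sum: "normH (\<phi>, z) \<le> normT \<phi> + cmod z"
proof -
  have "sqrt ((normT \<phi>)^2 + (cmod z)^2) \<le> normT \<phi> + cmod z"
    by (rule sqrt_sum_squares_le_sum) (auto simp: normT_nonneg)
  then show ?thesis by (simp add: normH_def)
qed

lemma normT_bounded: assumes "h \<in> L2T" "\<And>p. cmod (h p) \<le> B" shows "normT h \<le> B"
proof -
  have B: "B \<ge> 0" using assms(2)[of undefined] norm_ge_zero order_trans by blast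
  have "integral\<^sup>L MT (\<lambda>p. (cmod (h p))^2) \<le> integral\<^sup>L MT (\<lambda>p. B^2)"
  proof (rule integral_mono)
    show "integrable MT (\<lambda>p. (cmod (h p))^2)" using L2T_sq[OF assms(1)] .
    show "integrable MT (\<lambda>p. B^2)" by simp
    show "(cmod (h p))^2 \<le> B^2" for p using assms(2)[of p] by (intro power_mono) auto
  qed
  also have "integral\<^sup>L MT (\<lambda>p. B^2) = B^2 * (4*pi^2)"
    using integral_one_MT by (simp add: measure_MT')
  finally have "c0 * integral\<^sup>L MT (\<lambda>p. (cmod (h p))^2) \<le> c0 * (B^2 * (4*pi^2))"
    using c0_pos by (simp add: mult_left_mono)
  also have "\<dots> = B^2" by (simp add: c0_def)
  finally have "normT h \<le> sqrt (B^2)" unfolding normT_MT by (rule real_sqrt_le_mono)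
  then show ?thesis using B by simp
qed

lemma L2T_mult_bounded:
  assumes g: "g \<in> borel_measurable lborel" "\<And>p. cmod (g p) \<le> B" and \<phi>: "\<phi> \<in> L2T"
  shows "(\<lambda>p. g p * \<phi> p) \<in> L2T" "normT (\<lambda>p. g p * \<phi> p) \<le> B * normT \<phi>"
proof -
  have B: "B \<ge> 0" using g(2)[of undefined] norm_ge_zero order_trans by blast
  have le: "(cmod (g p * \<phi> p))^2 \<le> B^2 * (cmod (\<phi> p))^2" for p
  proof -
    have "cmod (g p * \<phi> p) \<le> B * cmod (\<phi> p)" using g(2)[of p] by (simp add: norm_mult mult_right_mono)
    then have "(cmod (g p * \<phi> p))^2 \<le> (B * cmod (\<phi> p))^2" by (intro power_mono) auto
    then show ?thesis by (simp add: power_mult_distrib)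
  qed
  have [measurable]: "\<phi> \<in> borel_measurable lborel" using \<phi> L2T_iff by blast
  note gm[measurable] = g(1)
  have m: "(\<lambda>p. g p * \<phi> p) \<in> borel_measurable lborel" by measurable
  have int: "integrable MT (\<lambda>p. (cmod (g p * \<phi> p))^2)"
  proof (rule Bochner_Integration.integrable_bound[where f="\<lambda>p. B^2 * (cmod (\<phi> p))^2"])
    show "integrable MT (\<lambda>p. B^2 * (cmod (\<phi> p))^2)" using L2T_sq[OF \<phi>] by simp
    show "(\<lambda>p. (cmod (g p * \<phi> p))^2) \<in> borel_measurable MT" using m by (simp add: meas_MT)
    show "AE x in MT. norm ((cmod (g x * \<phi> x))^2) \<le> norm (B^2 * (cmod (\<phi> x))^2)"
      using le by simp
  qed
  show "(\<lambda>p. g p * \<phi> p) \<in> L2T" using m int by (simp add: L2T_iff)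
  have "integral\<^sup>L MT (\<lambda>p. (cmod (g p * \<phi> p))^2) \<le> integral\<^sup>L MT (\<lambda>p. B^2 * (cmod (\<phi> p))^2)"
    by (rule integral_mono[OF int]) (use L2T_sq[OF \<phi>] le in auto)
  then have "c0 * integral\<^sup>L MT (\<lambda>p. (cmod (g p * \<phi> p))^2) \<le> B^2 * (c0 * integral\<^sup>L MT (\<lambda>p. (cmod (\<phi> p))^2))"
    using c0_pos by (simp add: mult_left_mono ac_simps)
  then have "normT (\<lambda>p. g p * \<phi> p) \<le> sqrt (B^2 * (c0 * integral\<^sup>L MT (\<lambda>p. (cmod (\<phi> p))^2)))"
    unfolding normT_MT by (rule real_sqrt_le_mono)
  also have "\<dots> = B * normT \<phi>" unfolding normT_MT using B by (simp add: real_sqrt_mult)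
  finally show "normT (\<lambda>p. g p * \<phi> p) \<le> B * normT \<phi>" .
qed

lemma ffun_meas: "(\<lambda>p. complex_of_real (ffun e k p)) \<in> borel_measurable lborel"
proof -
  have "(\<lambda>p::mom. complex_of_real (ffun e k p)) \<in> borel_measurable borel" unfolding ffun_def cos2_def
    by (intro borel_measurable_continuous_onI continuous_intros)
  then show ?thesis by simp
qed

lemma ffun_bound: "cmod (complex_of_real (ffun e k p)) \<le> 8 * \<bar>e\<bar>"
proof -
  have "\<bar>4 - cos2 (p + k) - cos2 p\<bar> \<le> 8"
    unfolding cos2_def using abs_cos_le_one[of "fst (p+k)"] abs_cos_le_one[of "snd (p+k)"]
      abs_cos_le_one[of "fst p"] abs_cos_le_one[of "snd p"] by linarith
  then have "\<bar>e\<bar> * \<bar>4 - cos2 (p + k) - cos2 p\<bar> \<le> \<bar>e\<bar> * 8" by (rule mult_left_mono) simp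
  moreover have "\<bar>ffun e k p\<bar> = \<bar>e\<bar> * \<bar>4 - cos2 (p + k) - cos2 p\<bar>" by (simp add: ffun_def abs_mult)
  ultimately show ?thesis unfolding norm_of_real by simp
qed

lemma bfun_bound: "\<bar>bfun e hb k\<bar> \<le> 4 * (\<bar>hb\<bar> * \<bar>e\<bar>)"
proof -
  have "\<bar>2 - cos2 k\<bar> \<le> 4"
    unfolding cos2_def using abs_cos_le_one[of "fst k"] abs_cos_le_one[of "snd k"] by linarith
  then have "(\<bar>hb\<bar> * \<bar>e\<bar>) * \<bar>2 - cos2 k\<bar> \<le> (\<bar>hb\<bar> * \<bar>e\<bar>) * 4" by (rule mult_left_mono) simp
  then show ?thesis unfolding bfun_def by (simp add: abs_mult ac_simps)
qed

locale opdata =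
  fixes \<epsilon> hb :: real and u \<upsilon> p1 p2 :: "site \<Rightarrow> real"
  assumes u_sum: "(\<lambda>x. \<bar>u x\<bar>) summable_on UNIV"
    and v_sum: "(\<lambda>x. \<bar>\<upsilon> x\<bar>) summable_on UNIV"
    and v_sym: "\<And>x. \<upsilon> (- x) = \<upsilon> x"
    and p1_sum: "(\<lambda>x. \<bar>p1 x\<bar>) summable_on UNIV"
    and p2_sum: "(\<lambda>x. \<bar>p2 x\<bar>) summable_on UNIV"
begin

definition coef :: "(mom \<Rightarrow> complex) \<Rightarrow> site \<Rightarrow> complex" where "coef \<phi> x = ipT (ehat x) \<phi>"
definition ua :: "(mom \<Rightarrow> complex) \<Rightarrow> site \<Rightarrow> complex" where "ua \<phi> x = complex_of_real (u x) * coef \<phi> x"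
definition dd :: "mom \<Rightarrow> mom \<Rightarrow> complex" where "dd k = dfun p1 p2 k"
definition vh :: "mom \<Rightarrow> real" where "vh k = Re (fhat \<upsilon> k)"
definition Su :: real where "Su = (\<Sum>\<^sub>\<infinity>x. \<bar>u x\<bar>)"
definition Sv :: real where "Sv = (\<Sum>\<^sub>\<infinity>x. \<bar>\<upsilon> x\<bar>)"
definition Sd :: real where "Sd = (\<Sum>\<^sub>\<infinity>x. \<bar>p1 x\<bar>) + (\<Sum>\<^sub>\<infinity>x. \<bar>p2 x\<bar>)"

lemma Su_nonneg: "Su \<ge> 0" unfolding Su_def by (rule infsum_nonneg) simp
lemma Sv_nonneg: "Sv \<ge> 0" unfolding Sv_def by (rule infsum_nonneg) simp
lemma Sd_nonneg: "Sd \<ge> 0" unfolding Sd_def by (intro add_nonneg_nonneg infsum_nonneg) simp_all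

lemma coef_add: "\<phi> \<in> L2T \<Longrightarrow> \<psi> \<in> L2T \<Longrightarrow> coef (\<lambda>p. \<phi> p + \<psi> p) x = coef \<phi> x + coef \<psi> x"
  unfolding coef_def by (rule ipT_add2[OF ehat_L2T])
lemma coef_sc: "coef (\<lambda>p. c * \<phi> p) x = c * coef \<phi> x"
  unfolding coef_def by (rule ipT_cmult2)
lemma coef_bound: "\<phi> \<in> L2T \<Longrightarrow> cmod (coef \<phi> x) \<le> normT \<phi>"
  unfolding coef_def by (rule ipT_ehat_bound')

lemma absS_u: "absS (\<lambda>x. complex_of_real (u x))"
  using u_sum by (rule summable_abs_real_absS)

lemma absS_ua: assumes "\<phi> \<in> L2T" shows "absS (ua \<phi>)"
  by (rule absS_comp[OF absS_u, where C="normT \<phi>"])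
     (simp add: ua_def norm_mult, metis coef_bound[OF assms] abs_ge_zero mult.commute mult_left_mono)

lemma nsum_ua: assumes "\<phi> \<in> L2T" shows "nsum (ua \<phi>) \<le> Su * normT \<phi>"
proof -
  have "nsum (ua \<phi>) = (\<Sum>\<^sub>\<infinity>x. cmod (ua \<phi> x))" by (simp add: nsum_def)
  also have "\<dots> \<le> (\<Sum>\<^sub>\<infinity>x. \<bar>u x\<bar> * normT \<phi>)"
  proof (rule infsum_mono)
    show "(\<lambda>x. cmod (ua \<phi> x)) summable_on UNIV" using absS_ua[OF assms] by (simp add: absS_def)
    show "(\<lambda>x. \<bar>u x\<bar> * normT \<phi>) summable_on UNIV" using u_sum by (rule summable_on_cmult_left)
    show "cmod (ua \<phi> x) \<le> \<bar>u x\<bar> * normT \<phi>" for x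
      by (simp add: ua_def norm_mult coef_bound[OF assms] mult_left_mono)
  qed
  also have "\<dots> = Su * normT \<phi>" unfolding Su_def by (rule infsum_cmult_left) (use u_sum in auto)
  finally show ?thesis .
qed

lemma ua_add: "\<phi> \<in> L2T \<Longrightarrow> \<psi> \<in> L2T \<Longrightarrow> ua (\<lambda>p. \<phi> p + \<psi> p) = (\<lambda>x. ua \<phi> x + ua \<psi> x)"
  by (rule ext) (simp add: ua_def coef_add distrib_left)
lemma ua_sc: "ua (\<lambda>p. c * \<phi> p) = (\<lambda>x. c * ua \<phi> x)"
  by (rule ext) (simp add: ua_def coef_sc ac_simps)

lemma dd_eq: "dd k = (\<lambda>p. ser (bco p1 k) p + ser (bco p2 ((1/2) *\<^sub>R k)) p)"
  unfolding dd_def by (rule dfun_ser)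

lemma dd_L2T: "dd k \<in> L2T"
  unfolding dd_eq by (intro L2T_add ser_L2T absS_bco p1_sum p2_sum)

lemma dd_bound: "cmod (dd k p) \<le> Sd"
proof -
  have "cmod (dd k p) \<le> cmod (ser (bco p1 k) p) + cmod (ser (bco p2 ((1/2) *\<^sub>R k)) p)"
    unfolding dd_eq by (rule norm_triangle_ineq)
  also have "\<dots> \<le> nsum (bco p1 k) + nsum (bco p2 ((1/2) *\<^sub>R k))"
    by (intro add_mono ser_bound absS_bco p1_sum p2_sum)
  also have "\<dots> = Sd" by (simp add: nsum_bco Sd_def)
  finally show ?thesis .
qed

lemma normT_dd: "normT (dd k) \<le> Sd"
  by (rule normT_bounded[OF dd_L2T dd_bound])

lemma fhat_vh: "fhat \<upsilon> k = complex_of_real (vh k)"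
  unfolding vh_def by (rule fhat_real) (rule v_sym)

lemma vh_bound: "\<bar>vh k\<bar> \<le> Sv"
  using norm_fhat[OF v_sum, of k] unfolding fhat_vh Sv_def by simp

lemma A11_eq: "A11 \<epsilon> u U k \<phi> = (\<lambda>p. complex_of_real (ffun \<epsilon> k p) * \<phi> p + ser (ua \<phi>) p
      + complex_of_real U * (coef \<phi> 0 * ehat 0 p))"
  unfolding A11_def projT_def ser_def ua_def coef_def by (simp add: mult.assoc)

lemma Aop_eq: "Aop \<epsilon> hb u \<upsilon> p1 p2 U k v =
   ((\<lambda>p. complex_of_real (ffun \<epsilon> k p) * fst v p + ser (ua (fst v)) p
      + complex_of_real U * (coef (fst v) 0 * ehat 0 p) + complex_of_real (vh k) * snd v * dd k p),
    complex_of_real (vh k) * ipT (dd k) (fst v) + complex_of_real (bfun \<epsilon> hb k) * snd v)"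
  unfolding Aop_def A11_eq fhat_vh dd_def by simp

end


lemma ipT_zero1[simp]: "ipT (\<lambda>p. 0) g = 0" unfolding ipT_MT by simp
lemma ipT_zero2[simp]: "ipT g (\<lambda>p. 0) = 0" unfolding ipT_MT by simp

lemma ipT_real_mult: "ipT \<psi> (\<lambda>p. complex_of_real (g p) * \<phi> p) = cnj (ipT \<phi> (\<lambda>p. complex_of_real (g p) * \<psi> p))"
proof -
  have "cnj (ipT \<phi> (\<lambda>p. complex_of_real (g p) * \<psi> p)) = ipT (\<lambda>p. complex_of_real (g p) * \<psi> p) \<phi>"
    by (rule ipT_cnj[symmetric])
  also have "\<dots> = ipT \<psi> (\<lambda>p. complex_of_real (g p) * \<phi> p)"
    unfolding ipT_MT by (simp add: ac_simps)
  finally show ?thesis ..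
qed

context opdata begin

abbreviation TA :: "real \<Rightarrow> mom \<Rightarrow> V \<Rightarrow> V" where "TA U k \<equiv> Aop \<epsilon> hb u \<upsilon> p1 p2 U k"

lemma pieces_L2T:
  assumes \<phi>: "\<phi> \<in> L2T"
  shows "(\<lambda>p. complex_of_real (ffun \<epsilon> k p) * \<phi> p) \<in> L2T"
    and "ser (ua \<phi>) \<in> L2T"
    and "(\<lambda>p. complex_of_real U * (coef \<phi> 0 * ehat 0 p)) \<in> L2T"
    and "(\<lambda>p. complex_of_real (vh k) * z * dd k p) \<in> L2T"
proof -
  show "(\<lambda>p. complex_of_real (ffun \<epsilon> k p) * \<phi> p) \<in> L2T"
    by (rule L2T_mult_bounded(1)[OF ffun_meas ffun_bound \<phi>])
  show "ser (ua \<phi>) \<in> L2T" by (rule ser_L2T[OF absS_ua[OF \<phi>]])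
  show "(\<lambda>p. complex_of_real U * (coef \<phi> 0 * ehat 0 p)) \<in> L2T"
    using L2T_cmult[OF ehat_L2T, of "complex_of_real U * coef \<phi> 0" 0] by (simp add: mult.assoc)
  show "(\<lambda>p. complex_of_real (vh k) * z * dd k p) \<in> L2T"
    using L2T_cmult[OF dd_L2T, of "complex_of_real (vh k) * z" k] by simp
qed

lemma TA_closed: assumes "v \<in> HT" shows "TA U k v \<in> HT"
proof -
  have \<phi>: "fst v \<in> L2T" using assms HT_iff by blast
  have 1: "(\<lambda>p. complex_of_real (ffun \<epsilon> k p) * fst v p) \<in> L2T" by (rule pieces_L2T(1)[OF \<phi>])
  have 2: "ser (ua (fst v)) \<in> L2T" by (rule pieces_L2T(2)[OF \<phi>])
  have 3: "(\<lambda>p. complex_of_real U * (coef (fst v) 0 * ehat 0 p)) \<in> L2T" by (rule pieces_L2T(3)[OF \<phi>])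
  have 4: "(\<lambda>p. complex_of_real (vh k) * snd v * dd k p) \<in> L2T" by (rule pieces_L2T(4)[OF \<phi>])
  show ?thesis unfolding Aop_eq HT_iff fst_conv
    using L2T_add[OF L2T_add[OF L2T_add[OF 1 2] 3] 4] by simp
qed

lemma TA_add: assumes "v \<in> HT" "w \<in> HT" shows "TA U k (vadd v w) = vadd (TA U k v) (TA U k w)"
proof -
  have \<phi>: "fst v \<in> L2T" and \<psi>: "fst w \<in> L2T" using assms HT_iff by blast+
  have s: "ser (ua (\<lambda>p. fst v p + fst w p)) p = ser (ua (fst v)) p + ser (ua (fst w)) p" for p
    unfolding ua_add[OF \<phi> \<psi>] by (rule ser_add[OF absS_ua[OF \<phi>] absS_ua[OF \<psi>]])
  show ?thesis unfolding Aop_eq vadd_def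
    by (simp add: s coef_add[OF \<phi> \<psi>] ipT_add2[OF dd_L2T \<phi> \<psi>] fun_eq_iff algebra_simps)
qed

lemma TA_sc: assumes "v \<in> HT" shows "TA U k (vsc c v) = vsc c (TA U k v)"
proof -
  have \<phi>: "fst v \<in> L2T" using assms HT_iff by blast
  have s: "ser (ua (\<lambda>p. c * fst v p)) p = c * ser (ua (fst v)) p" for p
    unfolding ua_sc by (rule ser_cmult[OF absS_ua[OF \<phi>]])
  show ?thesis unfolding Aop_eq vsc_def
    by (simp add: s coef_sc ipT_cmult2 fun_eq_iff algebra_simps)
qed

definition Lc :: "real \<Rightarrow> real" where
  "Lc U = 8 * \<bar>\<epsilon>\<bar> + Su + \<bar>U\<bar> + 2 * (Sv * Sd) + 4 * (\<bar>hb\<bar> * \<bar>\<epsilon>\<bar>)"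

lemma Lc_nonneg: "Lc U \<ge> 0"
  unfolding Lc_def using Su_nonneg Sv_nonneg Sd_nonneg by simp

lemma TA_bdd: assumes "v \<in> HT" shows "normH (TA U k v) \<le> Lc U * normH v"
proof -
  obtain \<phi> z where v: "v = (\<phi>, z)" by (cases v)
  have \<phi>: "\<phi> \<in> L2T" using assms v HT_iff by auto
  let ?n = "normH v"
  have a: "normT \<phi> \<le> ?n" and c: "cmod z \<le> ?n" using normT_le_normH cmod_le_normH v by auto
  have 1: "(\<lambda>p. complex_of_real (ffun \<epsilon> k p) * \<phi> p) \<in> L2T" by (rule pieces_L2T(1)[OF \<phi>])
  have 2: "ser (ua \<phi>) \<in> L2T" by (rule pieces_L2T(2)[OF \<phi>])
  have 3: "(\<lambda>p. complex_of_real U * (coef \<phi> 0 * ehat 0 p)) \<in> L2T" by (rule pieces_L2T(3)[OF \<phi>])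
  have 4: "(\<lambda>p. complex_of_real (vh k) * z * dd k p) \<in> L2T" by (rule pieces_L2T(4)[OF \<phi>])
  have n1: "normT (\<lambda>p. complex_of_real (ffun \<epsilon> k p) * \<phi> p) \<le> 8 * \<bar>\<epsilon>\<bar> * ?n"
  proof -
    have "normT (\<lambda>p. complex_of_real (ffun \<epsilon> k p) * \<phi> p) \<le> 8 * \<bar>\<epsilon>\<bar> * normT \<phi>"
      by (rule L2T_mult_bounded(2)[OF ffun_meas ffun_bound \<phi>])
    also have "\<dots> \<le> 8 * \<bar>\<epsilon>\<bar> * ?n" using a by (simp add: mult_left_mono)
    finally show ?thesis .
  qed
  have n2: "normT (ser (ua \<phi>)) \<le> Su * ?n"
  proof -
    have "normT (ser (ua \<phi>)) \<le> nsum (ua \<phi>)" by (rule normT_bounded[OF 2 ser_bound[OF absS_ua[OF \<phi>]]])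
    also have "\<dots> \<le> Su * normT \<phi>" by (rule nsum_ua[OF \<phi>])
    also have "\<dots> \<le> Su * ?n" using a Su_nonneg by (simp add: mult_left_mono)
    finally show ?thesis .
  qed
  have n3: "normT (\<lambda>p. complex_of_real U * (coef \<phi> 0 * ehat 0 p)) \<le> \<bar>U\<bar> * ?n"
  proof -
    have "normT (\<lambda>p. complex_of_real U * (coef \<phi> 0 * ehat 0 p)) = normT (\<lambda>p. (complex_of_real U * coef \<phi> 0) * ehat 0 p)"
      by (simp add: mult.assoc)
    also have "\<dots> = \<bar>U\<bar> * cmod (coef \<phi> 0)" by (simp add: normT_cmult normT_ehat norm_mult)
    also have "\<dots> \<le> \<bar>U\<bar> * ?n" using coef_bound[OF \<phi>, of 0] a by (intro mult_left_mono) auto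
    finally show ?thesis .
  qed
  have n4: "normT (\<lambda>p. complex_of_real (vh k) * z * dd k p) \<le> Sv * Sd * ?n"
  proof -
    have "normT (\<lambda>p. complex_of_real (vh k) * z * dd k p) = \<bar>vh k\<bar> * cmod z * normT (dd k)"
      by (simp add: normT_cmult norm_mult)
    also have "\<dots> \<le> Sv * ?n * Sd"
      using vh_bound[of k] c normT_dd[of k] normT_nonneg[of "dd k"] Sv_nonneg normH_nonneg[of v]
      by (intro mult_mono) (auto intro: mult_mono)
    finally show ?thesis by (simp add: ac_simps)
  qed
  have nf: "normT (fst (TA U k v)) \<le> (8 * \<bar>\<epsilon>\<bar> + Su + \<bar>U\<bar> + Sv * Sd) * ?n"
  proof -
    have "normT (fst (TA U k v)) \<le> normT (\<lambda>p. complex_of_real (ffun \<epsilon> k p) * \<phi> p + ser (ua \<phi>) p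
        + complex_of_real U * (coef \<phi> 0 * ehat 0 p)) + normT (\<lambda>p. complex_of_real (vh k) * z * dd k p)"
      unfolding v Aop_eq fst_conv snd_conv by (rule normT_add[OF L2T_add[OF L2T_add[OF 1 2] 3] 4])
    also have "\<dots> \<le> (normT (\<lambda>p. complex_of_real (ffun \<epsilon> k p) * \<phi> p + ser (ua \<phi>) p)
        + normT (\<lambda>p. complex_of_real U * (coef \<phi> 0 * ehat 0 p))) + normT (\<lambda>p. complex_of_real (vh k) * z * dd k p)"
      by (intro add_right_mono normT_add[OF L2T_add[OF 1 2] 3])
    also have "\<dots> \<le> ((normT (\<lambda>p. complex_of_real (ffun \<epsilon> k p) * \<phi> p) + normT (ser (ua \<phi>)))
        + normT (\<lambda>p. complex_of_real U * (coef \<phi> 0 * ehat 0 p))) + normT (\<lambda>p. complex_of_real (vh k) * z * dd k p)"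
      using normT_add[OF 1 2] by simp
    also have "\<dots> \<le> ((8 * \<bar>\<epsilon>\<bar> * ?n + Su * ?n) + \<bar>U\<bar> * ?n) + Sv * Sd * ?n"
      using n1 n2 n3 n4 by linarith
    finally show ?thesis by (simp add: algebra_simps)
  qed
  have ns: "cmod (snd (TA U k v)) \<le> (Sv * Sd + 4 * (\<bar>hb\<bar> * \<bar>\<epsilon>\<bar>)) * ?n"
  proof -
    have "cmod (snd (TA U k v)) \<le> cmod (complex_of_real (vh k) * ipT (dd k) \<phi>) + cmod (complex_of_real (bfun \<epsilon> hb k) * z)"
      unfolding v Aop_eq by simp (rule norm_triangle_ineq)
    also have "cmod (complex_of_real (vh k) * ipT (dd k) \<phi>) \<le> Sv * (Sd * ?n)"
    proof -
      have "cmod (ipT (dd k) \<phi>) \<le> normT (dd k) * normT \<phi>" by (rule ipT_bound[OF dd_L2T \<phi>])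
      also have "\<dots> \<le> Sd * ?n" using normT_dd a normT_nonneg Sd_nonneg by (intro mult_mono) auto
      finally show ?thesis using vh_bound[of k] by (simp add: norm_mult) (intro mult_mono, auto)
    qed
    also have "cmod (complex_of_real (bfun \<epsilon> hb k) * z) \<le> 4 * (\<bar>hb\<bar> * \<bar>\<epsilon>\<bar>) * ?n"
      using bfun_bound[of \<epsilon> hb k] c by (simp add: norm_mult) (intro mult_mono, auto)
    finally show ?thesis by (simp add: algebra_simps)
  qed
  have "normH (TA U k v) \<le> normT (fst (TA U k v)) + cmod (snd (TA U k v))"
    using normH_le_sum[of "fst (TA U k v)" "snd (TA U k v)"] by simp
  also have "\<dots> \<le> (8 * \<bar>\<epsilon>\<bar> + Su + \<bar>U\<bar> + Sv * Sd) * ?n + (Sv * Sd + 4 * (\<bar>hb\<bar> * \<bar>\<epsilon>\<bar>)) * ?n"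
    using nf ns by linarith
  also have "\<dots> = Lc U * ?n" by (simp add: Lc_def algebra_simps)
  finally show ?thesis .
qed

definition EE :: "real \<Rightarrow> mom \<Rightarrow> (mom \<Rightarrow> complex) \<Rightarrow> complex \<Rightarrow> (mom \<Rightarrow> complex) \<Rightarrow> complex \<Rightarrow> complex" where
  "EE U k \<phi> z \<psi> y = ipT \<phi> (\<lambda>p. complex_of_real (ffun \<epsilon> k p) * \<psi> p)
     + (\<Sum>\<^sub>\<infinity>x. ua \<psi> x * cnj (coef \<phi> x))
     + complex_of_real U * (coef \<psi> 0 * cnj (coef \<phi> 0))
     + complex_of_real (vh k) * y * ipT \<phi> (dd k)
     + cnj z * (complex_of_real (vh k) * ipT (dd k) \<psi> + complex_of_real (bfun \<epsilon> hb k) * y)"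

lemma ipH_TA: assumes "v \<in> HT" "w \<in> HT"
  shows "ipH v (TA U k w) = EE U k (fst v) (snd v) (fst w) (snd w)"
proof -
  obtain \<phi> z where v: "v = (\<phi>, z)" by (cases v)
  obtain \<psi> y where w: "w = (\<psi>, y)" by (cases w)
  have \<phi>: "\<phi> \<in> L2T" using assms v HT_iff by auto
  have \<psi>: "\<psi> \<in> L2T" using assms w HT_iff by auto
  have 1: "(\<lambda>p. complex_of_real (ffun \<epsilon> k p) * \<psi> p) \<in> L2T" by (rule pieces_L2T(1)[OF \<psi>])
  have 2: "ser (ua \<psi>) \<in> L2T" by (rule pieces_L2T(2)[OF \<psi>])
  have 3: "(\<lambda>p. complex_of_real U * (coef \<psi> 0 * ehat 0 p)) \<in> L2T" by (rule pieces_L2T(3)[OF \<psi>])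
  have 4: "(\<lambda>p. complex_of_real (vh k) * y * dd k p) \<in> L2T" by (rule pieces_L2T(4)[OF \<psi>])
  have "ipT \<phi> (fst (TA U k w)) = ipT \<phi> (\<lambda>p. complex_of_real (ffun \<epsilon> k p) * \<psi> p + ser (ua \<psi>) p
        + complex_of_real U * (coef \<psi> 0 * ehat 0 p)) + ipT \<phi> (\<lambda>p. complex_of_real (vh k) * y * dd k p)"
    unfolding w Aop_eq fst_conv snd_conv by (rule ipT_add2[OF \<phi> L2T_add[OF L2T_add[OF 1 2] 3] 4])
  also have "ipT \<phi> (\<lambda>p. complex_of_real (ffun \<epsilon> k p) * \<psi> p + ser (ua \<psi>) p
        + complex_of_real U * (coef \<psi> 0 * ehat 0 p))
      = ipT \<phi> (\<lambda>p. complex_of_real (ffun \<epsilon> k p) * \<psi> p + ser (ua \<psi>) p)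
        + ipT \<phi> (\<lambda>p. complex_of_real U * (coef \<psi> 0 * ehat 0 p))"
    by (rule ipT_add2[OF \<phi> L2T_add[OF 1 2] 3])
  also have "ipT \<phi> (\<lambda>p. complex_of_real (ffun \<epsilon> k p) * \<psi> p + ser (ua \<psi>) p)
      = ipT \<phi> (\<lambda>p. complex_of_real (ffun \<epsilon> k p) * \<psi> p) + ipT \<phi> (ser (ua \<psi>))"
    using ipT_add2[OF \<phi> 1 2] by simp
  also have "ipT \<phi> (ser (ua \<psi>)) = (\<Sum>\<^sub>\<infinity>x. ua \<psi> x * cnj (coef \<phi> x))"
    unfolding ipT_ser[OF absS_ua[OF \<psi>] \<phi>] coef_def by (simp add: ipT_cnj[of "ehat _" \<phi>])
  also have "ipT \<phi> (\<lambda>p. complex_of_real U * (coef \<psi> 0 * ehat 0 p))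
      = complex_of_real U * (coef \<psi> 0 * cnj (coef \<phi> 0))"
  proof -
    have "ipT \<phi> (\<lambda>p. complex_of_real U * (coef \<psi> 0 * ehat 0 p))
        = ipT \<phi> (\<lambda>p. (complex_of_real U * coef \<psi> 0) * ehat 0 p)" by (simp add: mult.assoc)
    also have "\<dots> = (complex_of_real U * coef \<psi> 0) * ipT \<phi> (ehat 0)" by (rule ipT_cmult2)
    also have "ipT \<phi> (ehat 0) = cnj (coef \<phi> 0)" unfolding coef_def by (rule ipT_cnj)
    finally show ?thesis by (simp add: mult.assoc)
  qed
  also have "ipT \<phi> (\<lambda>p. complex_of_real (vh k) * y * dd k p) = complex_of_real (vh k) * y * ipT \<phi> (dd k)"
    by (rule ipT_cmult2)
  finally have "ipT \<phi> (fst (TA U k w)) = ipT \<phi> (\<lambda>p. complex_of_real (ffun \<epsilon> k p) * \<psi> p)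
     + (\<Sum>\<^sub>\<infinity>x. ua \<psi> x * cnj (coef \<phi> x))
     + complex_of_real U * (coef \<psi> 0 * cnj (coef \<phi> 0))
     + complex_of_real (vh k) * y * ipT \<phi> (dd k)" .
  then show ?thesis unfolding ipH_def EE_def v w by (simp add: Aop_eq)
qed

lemma EE_cnj: assumes "\<phi> \<in> L2T" "\<psi> \<in> L2T"
  shows "EE U k \<psi> y \<phi> z = cnj (EE U k \<phi> z \<psi> y)"
proof -
  have e1: "ipT \<psi> (\<lambda>p. complex_of_real (ffun \<epsilon> k p) * \<phi> p) = cnj (ipT \<phi> (\<lambda>p. complex_of_real (ffun \<epsilon> k p) * \<psi> p))"
    by (rule ipT_real_mult)
  have e2: "(\<Sum>\<^sub>\<infinity>x. ua \<phi> x * cnj (coef \<psi> x)) = cnj (\<Sum>\<^sub>\<infinity>x. ua \<psi> x * cnj (coef \<phi> x))"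
    unfolding infsum_cnj[symmetric] by (rule infsum_cong) (simp add: ua_def)
  have e3: "ipT \<psi> (dd k) = cnj (ipT (dd k) \<psi>)" by (rule ipT_cnj)
  have e4: "ipT (dd k) \<phi> = cnj (ipT \<phi> (dd k))" by (rule ipT_cnj)
  show ?thesis unfolding EE_def e1 e2 e3 e4 by (simp add: algebra_simps)
qed

lemma TA_sym: assumes "v \<in> HT" "w \<in> HT"
  shows "Re (ipH v (TA U k w)) = Re (ipH w (TA U k v))"
proof -
  have \<phi>: "fst v \<in> L2T" and \<psi>: "fst w \<in> L2T" using assms HT_iff by auto
  show ?thesis unfolding ipH_TA[OF assms] ipH_TA[OF assms(2,1)] EE_cnj[OF \<phi> \<psi>] by simp
qed

lemma TA_sa: "sa_op (TA U k)"
proof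
  show "\<And>v. v \<in> HT \<Longrightarrow> TA U k v \<in> HT" by (rule TA_closed)
  show "\<And>v w. v \<in> HT \<Longrightarrow> w \<in> HT \<Longrightarrow> TA U k (vadd v w) = vadd (TA U k v) (TA U k w)" by (rule TA_add)
  show "\<And>v c. v \<in> HT \<Longrightarrow> TA U k (vsc c v) = vsc c (TA U k v)" by (rule TA_sc)
  show "\<exists>L\<ge>0. \<forall>v\<in>HT. normH (TA U k v) \<le> L * normH v" using TA_bdd Lc_nonneg by blast
  show "\<And>v w. v \<in> HT \<Longrightarrow> w \<in> HT \<Longrightarrow> Re (ipH v (TA U k w)) = Re (ipH w (TA U k v))" by (rule TA_sym)
qed

lemma form_U: assumes "v \<in> HT"
  shows "Re (ipH v (TA U' k v)) = Re (ipH v (TA U k v)) + (U' - U) * (cmod (coef (fst v) 0))^2"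
proof -
  have "EE U' k (fst v) (snd v) (fst v) (snd v) = EE U k (fst v) (snd v) (fst v) (snd v)
      + complex_of_real (U' - U) * (coef (fst v) 0 * cnj (coef (fst v) 0))"
    unfolding EE_def by (simp add: algebra_simps)
  moreover have "coef (fst v) 0 * cnj (coef (fst v) 0) = complex_of_real ((cmod (coef (fst v) 0))^2)"
    using cnj_mult_self[of "coef (fst v) 0"] by (simp add: mult.commute)
  ultimately show ?thesis unfolding ipH_TA[OF assms assms] by simp
qed

lemma form_v0: "ipH ((\<lambda>p. 0), 1) (TA U 0 ((\<lambda>p. 0), 1)) = 0"
  unfolding Aop_eq ipH_def by (simp add: bfun_def cos2_def)

end

context sa_op begin

lemma scale_lb:
  assumes lb: "\<forall>v\<in>HT. normH v = 1 \<longrightarrow> t \<le> Re (ipH v (T v))" and v: "v \<in> HT"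
  shows "t * (normH v)^2 \<le> Re (ipH v (T v))"
proof (cases "normH v = 0")
  case True
  have "\<bar>Re (ipH v (T v))\<bar> \<le> cmod (ipH v (T v))" by (rule abs_Re_le_cmod)
  also have "\<dots> \<le> normH v * normH (T v)" by (rule CS[OF v T_closed[OF v]])
  finally have "Re (ipH v (T v)) = 0" using True by simp
  then show ?thesis using True by simp
next
  case False
  then have n: "normH v > 0" using normH_nonneg[of v] by simp
  let ?c = "complex_of_real (1 / normH v)"
  let ?w = "vsc ?c v"
  have w: "?w \<in> HT" using v by (simp add: HT_vsc)
  have nw: "normH ?w = 1" using v n by (simp add: normH_vsc norm_divide)
  have "ipH ?w (T ?w) = cnj ?c * ?c * ipH v (T v)"
    using v by (simp add: T_sc ipH_sc1 ipH_sc2 mult.assoc)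
  then have "Re (ipH ?w (T ?w)) = Re (ipH v (T v)) / (normH v)^2"
    by (simp add: power2_eq_square)
  moreover have "t \<le> Re (ipH ?w (T ?w))" using lb w nw by blast
  ultimately have "t \<le> Re (ipH v (T v)) / (normH v)^2" by simp
  then show ?thesis using n by (simp add: pos_le_divide_eq)
qed

lemma form_lb: assumes "v \<in> HT" "normH v = 1" "\<forall>v\<in>HT. normH (T v) \<le> L * normH v"
  shows "- L \<le> Re (ipH v (T v))"
proof -
  have "\<bar>Re (ipH v (T v))\<bar> \<le> cmod (ipH v (T v))" by (rule abs_Re_le_cmod)
  also have "\<dots> \<le> normH v * normH (T v)" by (rule CS[OF assms(1) T_closed[OF assms(1)]])
  also have "\<dots> \<le> L"
  proof -
    have "normH (T v) \<le> L * normH v" using assms(1,3) by blast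
    then show ?thesis using assms(2) by simp
  qed
  finally show ?thesis by linarith
qed

end

lemma v1_HT: "((\<lambda>p. 0), 1) \<in> HT" by (simp add: HT_iff L2T_zero)
lemma v1_norm: "normH ((\<lambda>p. 0), 1) = 1" by (simp add: normH_def normT_def)
lemma zero_TT: "(0::mom) \<in> TT" by (simp add: TT_def zero_prod_def)

context opdata begin

definition Qk :: "real \<Rightarrow> mom \<Rightarrow> real set" where
  "Qk U k = {Re (ipH v (TA U k v)) | v. v \<in> HT \<and> normH v = 1}"
definition Q :: "real \<Rightarrow> real set" where
  "Q U = {Re (ipH v (TA U k v)) | k v. k \<in> TT \<and> v \<in> HT \<and> normH v = 1}"
definition MM :: "real \<Rightarrow> real" where "MM U = Inf (Q U)"
definition SS :: "real \<Rightarrow> real set" where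
  "SS U = {t. \<exists>k\<in>TT. complex_of_real t \<in> opspectrum (TA U k)}"

lemma Emin_SS: "Emin \<epsilon> hb u \<upsilon> p1 p2 U = Inf (SS U)"
  unfolding Emin_def SS_def ..

lemma Q_lb: "q \<in> Q U \<Longrightarrow> - Lc U \<le> q"
  unfolding Q_def using sa_op.form_lb[OF TA_sa] TA_bdd by blast

lemma Qk_lb: "q \<in> Qk U k \<Longrightarrow> - Lc U \<le> q"
  unfolding Qk_def using sa_op.form_lb[OF TA_sa] TA_bdd by blast

lemma Q_ne: "Q U \<noteq> {}" unfolding Q_def using v1_HT v1_norm zero_TT by blast
lemma Qk_ne: "Qk U k \<noteq> {}" unfolding Qk_def using v1_HT v1_norm by blast
lemma Q_bdd: "bdd_below (Q U)" by (rule bdd_belowI[of _ "- Lc U"]) (rule Q_lb)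
lemma Qk_bdd: "bdd_below (Qk U k)" by (rule bdd_belowI[of _ "- Lc U"]) (rule Qk_lb)

lemma Qk_sub: "k \<in> TT \<Longrightarrow> Qk U k \<subseteq> Q U" unfolding Qk_def Q_def by blast

lemma MM_le_Qk: "k \<in> TT \<Longrightarrow> q \<in> Qk U k \<Longrightarrow> MM U \<le> q"
proof -
  assume "k \<in> TT" "q \<in> Qk U k"
  then have "q \<in> Q U" using Qk_sub by blast
  then show "MM U \<le> q" unfolding MM_def using Q_bdd by (rule cInf_lower)
qed

lemma SS_lb: assumes "t \<in> SS U" shows "MM U \<le> t"
proof (rule ccontr)
  assume "\<not> MM U \<le> t"
  then have c: "MM U - t > 0" by simp
  from assms obtain k where k: "k \<in> TT" "complex_of_real t \<in> opspectrum (TA U k)" unfolding SS_def by blast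
  interpret sa_op "TA U k" by (rule TA_sa)
  have "\<forall>v\<in>HT. normH v = 1 \<longrightarrow> MM U \<le> Re (ipH v (TA U k v))"
    using MM_le_Qk[OF k(1)] unfolding Qk_def by blast
  then have "\<forall>v\<in>HT. (t + (MM U - t)) * (normH v)^2 \<le> Re (ipH v (TA U k v))"
    using scale_lb by simp
  from not_in_spec[OF c this] k(2) show False by blast
qed

lemma mk_in_SS: assumes k: "k \<in> TT" shows "Inf (Qk U k) \<in> SS U"
proof -
  interpret sa_op "TA U k" by (rule TA_sa)
  have "\<forall>v\<in>HT. normH v = 1 \<longrightarrow> Inf (Qk U k) \<le> Re (ipH v (TA U k v))"
  proof (intro ballI impI)
    fix v assume "v \<in> HT" "normH v = 1"
    then have "Re (ipH v (TA U k v)) \<in> Qk U k" unfolding Qk_def by blast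
    then show "Inf (Qk U k) \<le> Re (ipH v (TA U k v))" using Qk_bdd by (rule cInf_lower)
  qed
  then have lb: "\<forall>v\<in>HT. Inf (Qk U k) * (normH v)^2 \<le> Re (ipH v (TA U k v))"
    using scale_lb by blast
  have small: "\<exists>v\<in>HT. normH v = 1 \<and> Re (ipH v (TA U k v)) < Inf (Qk U k) + \<delta>" if "\<delta> > 0" for \<delta>
  proof -
    have "Inf (Qk U k) < Inf (Qk U k) + \<delta>" using that by simp
    then obtain q where "q \<in> Qk U k" "q < Inf (Qk U k) + \<delta>"
      using cInf_less_iff[OF Qk_ne Qk_bdd] by blast
    then show ?thesis unfolding Qk_def by blast
  qed
  have "complex_of_real (Inf (Qk U k)) \<in> opspectrum (TA U k)" by (rule in_spec[OF lb small])
  then show ?thesis unfolding SS_def using k by blast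
qed

lemma Emin_MM: "Emin \<epsilon> hb u \<upsilon> p1 p2 U = MM U"
proof -
  have ne: "SS U \<noteq> {}" using mk_in_SS[OF zero_TT] by blast
  have bdd: "bdd_below (SS U)" using SS_lb by (auto simp: bdd_below_def)
  have ge: "MM U \<le> Inf (SS U)" by (rule cInf_greatest[OF ne]) (rule SS_lb)
  have le: "Inf (SS U) \<le> MM U + \<eta>" if "\<eta> > 0" for \<eta>
  proof -
    have "MM U < MM U + \<eta>" using that by simp
    then obtain q where q: "q \<in> Q U" "q < MM U + \<eta>"
      using cInf_less_iff[OF Q_ne Q_bdd] unfolding MM_def by blast
    then obtain k v where kv: "k \<in> TT" "v \<in> HT" "normH v = 1" "q = Re (ipH v (TA U k v))"
      unfolding Q_def by blast
    have "q \<in> Qk U k" unfolding Qk_def using kv by blast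
    then have "Inf (Qk U k) \<le> q" using Qk_bdd by (rule cInf_lower)
    moreover have "Inf (SS U) \<le> Inf (Qk U k)" using mk_in_SS[OF kv(1)] bdd by (rule cInf_lower)
    ultimately show ?thesis using q by simp
  qed
  have "Inf (SS U) \<le> MM U"
  proof (rule ccontr)
    assume "\<not> Inf (SS U) \<le> MM U"
    then have "Inf (SS U) - MM U > 0" by simp
    then have "(Inf (SS U) - MM U) / 2 > 0" by simp
    from le[OF this] \<open>Inf (SS U) - MM U > 0\<close> show False by (simp add: field_simps)
  qed
  with ge show ?thesis unfolding Emin_SS by simp
qed

lemma MM_mono: assumes "U \<le> U'" shows "MM U \<le> MM U'"
  unfolding MM_def
proof (rule cInf_greatest[OF Q_ne])
  fix q' assume "q' \<in> Q U'"
  then obtain k v where kv: "k \<in> TT" "v \<in> HT" "normH v = 1" "q' = Re (ipH v (TA U' k v))"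
    unfolding Q_def by blast
  have "Re (ipH v (TA U k v)) \<in> Q U" unfolding Q_def using kv by blast
  then have "Inf (Q U) \<le> Re (ipH v (TA U k v))" using Q_bdd by (rule cInf_lower)
  also have "\<dots> \<le> q'" unfolding kv(4) form_U[OF kv(2), of U' k U] using assms by simp
  finally show "Inf (Q U) \<le> q'" .
qed

lemma MM_nonpos: "MM U \<le> 0"
proof -
  have "0 \<in> Q U" unfolding Q_def using v1_HT v1_norm zero_TT form_v0[of U]
    by (intro CollectI exI[of _ 0] exI[of _ "((\<lambda>p. 0), 1)"]) simp
  then show ?thesis unfolding MM_def using Q_bdd by (rule cInf_lower)
qed

end

theorem lemma4p14:
  fixes \<epsilon> hb :: real and u \<upsilon> p1 p2 :: "int \<times> int \<Rightarrow> real"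
  assumes "\<epsilon> \<ge> 0" and "hb \<ge> 0"
    and "\<forall>x. u x \<ge> 0"
    and "\<forall>x. u (rot90 x) = u x" and "\<forall>x. \<upsilon> (rot90 x) = \<upsilon> x"
    and "\<forall>x. p1 (rot90 x) = p1 x" and "\<forall>x. p2 (rot90 x) = p2 x"
    and "(\<lambda>x. \<bar>u x\<bar>) summable_on UNIV" and "(\<lambda>x. \<bar>\<upsilon> x\<bar>) summable_on UNIV"
    and "\<exists>\<alpha>0>0. (\<lambda>z. exp (\<alpha>0 * lnorm z) * \<bar>p1 z\<bar>) summable_on UNIV
              \<and> (\<lambda>z. exp (\<alpha>0 * lnorm z) * \<bar>p2 z\<bar>) summable_on UNIV"
    and "\<forall>z. \<not> (even (fst z) \<and> even (snd z)) \<longrightarrow> p2 z = 0"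
    and "\<exists>z. p1 z + p2 z \<noteq> 0"
    and "\<forall>k\<in>TT. \<exists>x. complex_of_real (p2 x)
                     \<noteq> - exp (\<i> * complex_of_real (dotp k x / 2)) * complex_of_real (p1 x)"
  shows "mono_on {0..} (\<lambda>U. Emin \<epsilon> hb u \<upsilon> p1 p2 U)
         \<and> ((\<lambda>U. Emin \<epsilon> hb u \<upsilon> p1 p2 U) \<longlongrightarrow> (SUP U\<in>{0..}. Emin \<epsilon> hb u \<upsilon> p1 p2 U)) at_top
         \<and> (SUP U\<in>{0..}. Emin \<epsilon> hb u \<upsilon> p1 p2 U) \<le> 0"
proof -
  have vsym: "\<upsilon> (- x) = \<upsilon> x" for x
  proof -
    have "rot90 (rot90 x) = - x" by (cases x) (simp add: rot90_def)
    then show ?thesis using assms(5) by metis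
  qed
  obtain \<alpha> where \<alpha>: "\<alpha> > 0" "(\<lambda>z. exp (\<alpha> * lnorm z) * \<bar>p1 z\<bar>) summable_on UNIV"
      "(\<lambda>z. exp (\<alpha> * lnorm z) * \<bar>p2 z\<bar>) summable_on UNIV"
    using assms(10) by blast
  have ge: "\<bar>p z\<bar> \<le> exp (\<alpha> * lnorm z) * \<bar>p z\<bar>" for p :: "site \<Rightarrow> real" and z
  proof -
    have "lnorm z \<ge> 0" by (simp add: lnorm_def)
    then have "1 \<le> exp (\<alpha> * lnorm z)" using \<alpha>(1) by simp
    then show ?thesis by (simp add: mult_le_cancel_right1)
  qed
  have p1s: "(\<lambda>x. \<bar>p1 x\<bar>) summable_on UNIV"
    by (rule summable_on_comparison_test[OF \<alpha>(2)]) (auto intro: ge)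
  have p2s: "(\<lambda>x. \<bar>p2 x\<bar>) summable_on UNIV"
    by (rule summable_on_comparison_test[OF \<alpha>(3)]) (auto intro: ge)
  interpret opdata \<epsilon> hb u \<upsilon> p1 p2
    by unfold_locales (use assms(8,9) vsym p1s p2s in auto)
  have E: "(\<lambda>U. Emin \<epsilon> hb u \<upsilon> p1 p2 U) = MM" by (rule ext) (rule Emin_MM)
  have bdd: "bdd_above (MM ` {0..})" using MM_nonpos by (auto simp: bdd_above_def)
  have ne: "{0::real..} \<noteq> {}" by auto
  let ?S = "SUP U\<in>{0..}. MM U"
  have mono: "mono_on {0..} MM" by (rule mono_onI) (rule MM_mono)
  have sup: "?S \<le> 0" by (rule cSUP_least[OF ne]) (rule MM_nonpos)
  have lim: "(MM \<longlongrightarrow> ?S) at_top"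
  proof (rule tendstoI)
    fix e :: real assume e: "e > 0"
    have "?S - e < ?S" using e by simp
    then obtain U0 where U0: "U0 \<in> {0..}" "?S - e < MM U0"
      using less_cSUP_iff[OF ne bdd] by blast
    show "eventually (\<lambda>U. dist (MM U) ?S < e) at_top"
      unfolding eventually_at_top_linorder
    proof (intro exI allI impI)
      fix U assume U: "U \<ge> U0"
      then have "MM U0 \<le> MM U" by (rule MM_mono)
      moreover have "MM U \<le> ?S" using U0 U by (intro cSUP_upper bdd) auto
      ultimately show "dist (MM U) ?S < e" using U0 by (simp add: dist_real_def)
    qed
  qed
  show ?thesis unfolding E using mono sup lim by simp
qed

end
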